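(* Setting and construction as in the context. Assume $g$ is convex and Lipschitz continuous. Then: (a) $\underline{v}(t,x)\le v(t,x)$ for all $(t,x)\in[0,T]\times\mathbb{R}^n$. (b) Assume additionally that for every $s\in[0,T]$ the set $\mathbb{W}(s)=B(s)\mathbb{U}\ominus(-E(s)\mathbb{D})$ is nonempty and $\mathbb{W}(s)\oplus(-E(s)\mathbb{D})=B(s)\mathbb{U}$. Fix $t\in[0,T]$, $k\in\{1,\dots,N\}$, $i\in\{1,\dots,n_k\}$, and suppose $(\xi^\star,\omega^\star)$ with $\omega^\star\in\mathscr{W}[t,T]$ and $\xi^\star(T)=\bar x_{i,k}$ satisfies, together with $\lambda=\lambda_{i,k}$, the system $\dot\xi^\star(s)=A(s)\xi^\star(s)+\omega^\star(s)$, $\dot\lambda(s)=-A(s)'\lambda(s)$ a.e. $s\in(t,T)$, $\omega^\star(s)\in\arg\max_{\omega\in\mathbb{W}(s)}\langle-\lambda(s),\omega\rangle$, $\lambda(T)\in D^-g(\bar x_{i,k})$. Then $v(t,\xi^\star(t))=\underline{v}(t,\xi^\star(t))=\gamma_k$.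
   Context: Fix $T>0$, integers $n,m,\ell\ge1$, $A\in C([0,T];\mathbb{R}^{n\times n})$, $B\in C([0,T];\mathbb{R}^{n\times m})$, $E\in C([0,T];\mathbb{R}^{n\times\ell})$, compact convex nonempty $\mathbb{U}\subset\mathbb{R}^m$, $\mathbb{D}\subset\mathbb{R}^\ell$, and $g\in C(\mathbb{R}^n;\mathbb{R})$. $\mathscr{U}[t,T]$, $\mathscr{D}[t,T]$ are the measurable maps $[t,T]\to\mathbb{U}$, $\to\mathbb{D}$; $\xi^{u,d}_{t,x}$ solves $\dot\xi=A\xi+Bu+Ed$ a.e. on $(t,T)$, $\xi(t)=x$. $\Delta[t,T]$ is the set of non-anticipative $\delta:\mathscr{U}[t,T]\to\mathscr{D}[t,T]$ ($u_1=u_2$ a.e. on $[t,s]$ implies $\delta[u_1]=\delta[u_2]$ a.e. on $[t,s]$, for every $s\in[t,T]$). Value function: $v(t,x)=\sup_{\delta\in\Delta[t,T]}\inf_{u\in\mathscr{U}[t,T]}g(\xi^{u,\delta[u]}_{t,x}(T))$. $Y\oplus Z=\{y+z\}$, $Y\ominus Z=\{c:\{c\}\oplus Z\subseteq Y\}$, $PY=\{Py:y\in Y\}$; $\mathscr{W}[t,T]$ is the set of measurable $\omega:[t,T]\to\mathbb{R}^n$ with $\omega(s)\in\mathbb{W}(s)$. $D^-g(\bar x)$ is the set of $p$ with $\liminf_{x\to\bar x}\frac{g(x)-g(\bar x)-\langle p,x-\bar x\rangle}{\|x-\bar x\|}\ge0$. Construction of $\underline{v}$: $N\in\mathbb{N}$,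 levels $\gamma_1,\dots,\gamma_N\in g(\mathbb{R}^n)$, $n_k\in\mathbb{N}$, points $\bar x_{i,k}\in g^{-1}(\{\gamma_k\})$, $p_{i,k}\in D^-g(\bar x_{i,k})$; $(\lambda_{i,k},q_{i,k})$ solve on $[0,T]$: $\dot\lambda=-A'\lambda$, $\dot q(s)=\max_{u\in\mathbb{U}}\min_{d\in\mathbb{D}}\langle-\lambda(s),B(s)u+E(s)d\rangle$, $\lambda_{i,k}(T)=p_{i,k}$, $q_{i,k}(T)=-\langle p_{i,k},\bar x_{i,k}\rangle+\gamma_k$; $\underline{v}(t,x)=\max_k\max_i(\langle\lambda_{i,k}(t),x\rangle+q_{i,k}(t))$. *)

theory Defs
  imports "HOL-Analysis.Analysis"
begin

definition ctrl_set :: "real \<Rightarrow> real \<Rightarrow> 'a::euclidean_space set \<Rightarrow> (real \<Rightarrow> 'a) set" where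
  "ctrl_set t T S = {u. u \<in> borel_measurable (lebesgue_on {t..T}) \<and> (\<forall>s\<in>{t..T}. u s \<in> S)}"

definition nonanticip ::
  "real \<Rightarrow> real \<Rightarrow> 'm::euclidean_space set \<Rightarrow> 'd::euclidean_space set
     \<Rightarrow> ((real \<Rightarrow> 'm) \<Rightarrow> (real \<Rightarrow> 'd)) set" where
  "nonanticip t T U D = {\<delta>.
     (\<forall>u\<in>ctrl_set t T U. \<delta> u \<in> ctrl_set t T D) \<and>
     (\<forall>u1\<in>ctrl_set t T U. \<forall>u2\<in>ctrl_set t T U. \<forall>s\<in>{t..T}.
        (AE r in lebesgue_on {t..s}. u1 r = u2 r) \<longrightarrow>
        (AE r in lebesgue_on {t..s}. \<delta> u1 r = \<delta> u2 r))}"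

text \<open>xi solves xi' = A xi + f a.e. on (t,T), xi(t) = x (absolutely continuous
  solution, in integral form).\<close>
definition is_traj ::
  "real \<Rightarrow> (real \<Rightarrow> real^'n^'n) \<Rightarrow> (real \<Rightarrow> real^'n) \<Rightarrow> real \<Rightarrow> real^'n
     \<Rightarrow> (real \<Rightarrow> real^'n) \<Rightarrow> bool" where
  "is_traj T A f t x \<xi> \<longleftrightarrow>
     (\<forall>s\<in>{t..T}. ((\<lambda>r. A r *v \<xi> r + f r) has_integral (\<xi> s - x)) {t..s})"

definition endpoint ::
  "real \<Rightarrow> (real \<Rightarrow> real^'n^'n) \<Rightarrow> (real \<Rightarrow> real^'m^'n) \<Rightarrow> (real \<Rightarrow> real^'l^'n)
     \<Rightarrow> real \<Rightarrow> real^'n \<Rightarrow> (real \<Rightarrow> real^'m) \<Rightarrow> (real \<Rightarrow> real^'l) \<Rightarrow> real^'n" where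
  "endpoint T A B E t x u d =
     (THE y. \<exists>\<xi>. is_traj T A (\<lambda>r. B r *v u r + E r *v d r) t x \<xi> \<and> \<xi> T = y)"

definition value_fn ::
  "real \<Rightarrow> (real \<Rightarrow> real^'n^'n) \<Rightarrow> (real \<Rightarrow> real^'m^'n) \<Rightarrow> (real \<Rightarrow> real^'l^'n)
     \<Rightarrow> (real^'m) set \<Rightarrow> (real^'l) set \<Rightarrow> (real^'n \<Rightarrow> real) \<Rightarrow> real \<Rightarrow> real^'n \<Rightarrow> real" where
  "value_fn T A B E U D g t x =
     (SUP \<delta>\<in>nonanticip t T U D. INF u\<in>ctrl_set t T U. g (endpoint T A B E t x u (\<delta> u)))"

definition frechet_subdiff :: "('a::real_inner \<Rightarrow> real) \<Rightarrow> 'a \<Rightarrow> 'a set" where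
  "frechet_subdiff g xb = {p.
     Liminf (at xb) (\<lambda>x. ereal ((g x - g xb - inner p (x - xb)) / norm (x - xb))) \<ge> 0}"

text \<open>max_{u in U} min_{d in D} <-lam, B(s)u + E(s)d> (max/min attained by compactness).\<close>
definition hamil ::
  "(real \<Rightarrow> real^'m^'n) \<Rightarrow> (real \<Rightarrow> real^'l^'n) \<Rightarrow> (real^'m) set \<Rightarrow> (real^'l) set
     \<Rightarrow> real^'n \<Rightarrow> real \<Rightarrow> real" where
  "hamil B E U D lam s = (SUP u\<in>U. INF d\<in>D. inner (- lam) (B s *v u + E s *v d))"

definition msum :: "'a::ab_group_add set \<Rightarrow> 'a set \<Rightarrow> 'a set" where
  "msum Y Z = {y + z | y z. y \<in> Y \<and> z \<in> Z}"

definition mdiff :: "'a::ab_group_add set \<Rightarrow> 'a set \<Rightarrow> 'a set" where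
  "mdiff Y Z = {c. msum {c} Z \<subseteq> Y}"

definition Wset ::
  "(real \<Rightarrow> real^'m^'n) \<Rightarrow> (real \<Rightarrow> real^'l^'n) \<Rightarrow> (real^'m) set \<Rightarrow> (real^'l) set
     \<Rightarrow> real \<Rightarrow> (real^'n) set" where
  "Wset B E U D s = mdiff ((\<lambda>u. B s *v u) ` U) ((\<lambda>d. - (E s *v d)) ` D)"

definition vlow ::
  "(nat \<Rightarrow> nat \<Rightarrow> real \<Rightarrow> real^'n) \<Rightarrow> (nat \<Rightarrow> nat \<Rightarrow> real \<Rightarrow> real) \<Rightarrow> nat \<Rightarrow> (nat \<Rightarrow> nat)
     \<Rightarrow> real \<Rightarrow> real^'n \<Rightarrow> real" where
  "vlow lam q N nk t x =
     Max {inner (lam i k t) x + q i k t | i k. k \<in> {1..N} \<and> i \<in> {1..nk k}}"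

end

theory Submission
  imports Defs
begin

lemma mv_norm_le:
  fixes M :: "real^'m^'n"
  shows "norm (M *v x) \<le> real CARD('n) * real CARD('m) * norm M * norm x"
proof -
  have "onorm ((*v) M) \<le> real CARD('n) * real CARD('m) * norm M"
    by (rule onorm_le_matrix_component) (rule order_trans[OF component_le_norm_cart Finite_Cartesian_Product.norm_nth_le])
  moreover have "norm (M *v x) \<le> onorm ((*v) M) * norm x"
    by (rule onorm) (simp add: linear_conv_bounded_linear matrix_vector_mul_linear)
  ultimately show ?thesis
    by (meson mult_right_mono norm_ge_zero order_trans)
qed

lemma mat_bound:
  fixes A :: "real \<Rightarrow> real^'m^'n"
  assumes "continuous_on S A" "compact S"
  shows "\<exists>\<alpha>\<ge>0. \<forall>s\<in>S. \<forall>y. norm (A s *v y) \<le> \<alpha> * norm y"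
proof -
  obtain R where R: "R > 0" "\<And>s. s \<in> S \<Longrightarrow> norm (A s) \<le> R"
    using compact_imp_bounded[OF compact_continuous_image[OF assms]] by (auto simp: bounded_pos)
  show ?thesis
  proof (intro exI[of _ "real CARD('n) * real CARD('m) * R"] conjI ballI allI)
    fix s y assume s: "s \<in> S"
    have "norm (A s *v y) \<le> real CARD('n) * real CARD('m) * norm (A s) * norm y"
      by (rule mv_norm_le)
    also have "\<dots> \<le> real CARD('n) * real CARD('m) * R * norm y"
      using R(2)[OF s] by (intro mult_right_mono mult_left_mono) auto
    finally show "norm (A s *v y) \<le> real CARD('n) * real CARD('m) * R * norm y" .
  qed (use R in auto)
qed

lemma gronwall:
  fixes \<phi> :: "real \<Rightarrow> real"
  assumes tT: "t \<le> T" and cont: "continuous_on {t..T} \<phi>" and a: "\<alpha> \<ge> 0"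
    and le: "\<And>s. s \<in> {t..T} \<Longrightarrow> \<phi> s \<le> c + \<alpha> * integral {t..s} \<phi>"
    and s: "s \<in> {t..T}"
  shows "\<phi> s \<le> c * exp (\<alpha> * (s - t))"
proof (cases "s = t")
  case True
  then show ?thesis using le[OF s] by simp
next
  case False
  then have ts: "t < s" using s by auto
  have contS: "continuous_on {t..s} \<phi>" using cont s by (auto intro: continuous_on_subset)
  define H where "H r = exp (- \<alpha> * (r - t)) * (c + \<alpha> * integral {t..r} \<phi>)" for r
  define H' where "H' r = exp (- \<alpha> * (r - t)) * (- \<alpha>) * (c + \<alpha> * integral {t..r} \<phi>)
      + exp (- \<alpha> * (r - t)) * (\<alpha> * \<phi> r)" for r
  have D: "(H has_derivative (*) (H' r)) (at r within {t..s})" if r: "t \<le> r" "r \<le> s" for r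
  proof -
    have G: "((\<lambda>u. integral {t..u} \<phi>) has_real_derivative \<phi> r) (at r within {t..s})"
      using integral_has_vector_derivative[OF contS, of r] r
      by (simp add: has_real_derivative_iff_has_vector_derivative)
    have "(H has_real_derivative H' r) (at r within {t..s})"
      unfolding H_def H'_def
      by (rule derivative_eq_intros G refl | simp)+
    then show ?thesis by (simp add: has_field_derivative_def)
  qed
  obtain z where z: "z \<in> {t<..<s}" "H s - H t = H' z * (s - t)"
    using mvt_simple[OF ts D] by auto
  have zT: "z \<in> {t..T}" using z s by auto
  have "H' z = exp (- \<alpha> * (z - t)) * \<alpha> * (\<phi> z - (c + \<alpha> * integral {t..z} \<phi>))"
    unfolding H'_def by (simp add: algebra_simps)
  also have "\<dots> \<le> 0"
    using le[OF zT] a by (intro mult_nonneg_nonpos) auto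
  finally have "H' z * (s - t) \<le> 0" using ts by (simp add: mult_nonpos_nonneg)
  then have "H s \<le> H t" using z by linarith
  then have "exp (- \<alpha> * (s - t)) * (c + \<alpha> * integral {t..s} \<phi>) \<le> c"
    by (simp add: H_def)
  then have "c + \<alpha> * integral {t..s} \<phi> \<le> c * exp (\<alpha> * (s - t))"
  proof -
    assume h: "exp (- \<alpha> * (s - t)) * (c + \<alpha> * integral {t..s} \<phi>) \<le> c"
    have e: "exp (\<alpha> * (s - t)) * exp (- (\<alpha> * (s - t))) = 1" by (simp add: exp_add[symmetric])
    have "c + \<alpha> * integral {t..s} \<phi> = exp (\<alpha> * (s - t)) * (exp (- \<alpha> * (s - t)) * (c + \<alpha> * integral {t..s} \<phi>))"
      by (simp only: mult.assoc[symmetric] e mult_minus_left) simp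
    also have "\<dots> \<le> exp (\<alpha> * (s - t)) * c" using h by (intro mult_left_mono) auto
    finally show ?thesis by (simp add: mult.commute)
  qed
  then show ?thesis using le[OF s] by linarith
qed


lemma continuous_on_mv:
  fixes A :: "real \<Rightarrow> real^'m^'n"
  assumes "continuous_on S A" "continuous_on S \<phi>"
  shows "continuous_on S (\<lambda>r. A r *v \<phi> r)"
  unfolding matrix_vector_mult_def
  by (intro continuous_on_vec_lambda continuous_intros continuous_on_component assms)

lemma traj_eq:
  assumes "is_traj T A f t x \<xi>" "s \<in> {t..T}"
  shows "\<xi> s = x + integral {t..s} (\<lambda>r. A r *v \<xi> r + f r)"
proof -
  have "integral {t..s} (\<lambda>r. A r *v \<xi> r + f r) = \<xi> s - x"
    using assms unfolding is_traj_def by (intro integral_unique) auto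
  then show ?thesis by simp
qed

lemma traj_int:
  assumes "is_traj T A f t x \<xi>" "t \<le> s" "s \<le> T"
  shows "(\<lambda>r. A r *v \<xi> r + f r) integrable_on {t..s}"
  using assms unfolding is_traj_def by auto

lemma traj_start:
  assumes "is_traj T A f t x \<xi>" "t \<le> T"
  shows "\<xi> t = x"
  using traj_eq[OF assms(1), of t] assms by simp

lemma traj_cont:
  assumes "is_traj T A f t x \<xi>" "t \<le> T"
  shows "continuous_on {t..T} \<xi>"
proof -
  have "continuous_on {t..T} (\<lambda>s. x + integral {t..s} (\<lambda>r. A r *v \<xi> r + f r))"
    using indefinite_integral_continuous_1[OF traj_int[OF assms(1) assms(2) order_refl]]
    by (intro continuous_intros)
  then show ?thesis
    by (rule continuous_on_eq) (use traj_eq[OF assms(1)] in auto)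
qed

lemma traj_incr:
  assumes "is_traj T A f t x \<xi>" "t \<le> s1" "s1 \<le> s2" "s2 \<le> T"
  shows "((\<lambda>r. A r *v \<xi> r + f r) has_integral (\<xi> s2 - \<xi> s1)) {s1..s2}"
proof -
  let ?g = "\<lambda>r. A r *v \<xi> r + f r"
  have h1: "(?g has_integral (\<xi> s1 - x)) {t..s1}" and h2: "(?g has_integral (\<xi> s2 - x)) {t..s2}"
    using assms unfolding is_traj_def by auto
  have i2: "?g integrable_on {t..s2}" using h2 by auto
  have i: "?g integrable_on {s1..s2}"
    by (rule integrable_subinterval_real[OF i2]) (use assms in auto)
  have "(?g has_integral (\<xi> s1 - x) + integral {s1..s2} ?g) {t..s2}"
    by (rule has_integral_combine[OF assms(2,3) h1]) (use i in auto)
  then have "\<xi> s2 - x = (\<xi> s1 - x) + integral {s1..s2} ?g"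
    using h2 has_integral_unique by blast
  then have "integral {s1..s2} ?g = \<xi> s2 - \<xi> s1" by (simp add: algebra_simps)
  then show ?thesis using i by (metis has_integral_integral)
qed

lemma traj_Axi_int:
  assumes "is_traj T A f t x \<xi>" "t \<le> s1" "s1 \<le> s2" "s2 \<le> T" "continuous_on {t..T} A"
  shows "(\<lambda>r. A r *v \<xi> r) integrable_on {s1..s2}"
proof -
  have "continuous_on {t..T} (\<lambda>r. A r *v \<xi> r)"
    using continuous_on_mv[OF assms(5) traj_cont[OF assms(1)]] assms by auto
  then have "continuous_on {s1..s2} (\<lambda>r. A r *v \<xi> r)"
    by (rule continuous_on_subset) (use assms in auto)
  then show ?thesis by (rule integrable_continuous_interval)
qed

lemma traj_f_int:
  assumes "is_traj T A f t x \<xi>" "t \<le> s1" "s1 \<le> s2" "s2 \<le> T" "continuous_on {t..T} A"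
  shows "f integrable_on {s1..s2}"
proof -
  have "(\<lambda>r. (A r *v \<xi> r + f r) - A r *v \<xi> r) integrable_on {s1..s2}"
    using traj_incr[OF assms(1-4)] traj_Axi_int[OF assms]
    by (intro integrable_diff) auto
  then show ?thesis by simp
qed

lemma traj_restrict:
  assumes "is_traj T A f t x \<xi>" "T' \<le> T"
  shows "is_traj T' A f t x \<xi>"
  using assms unfolding is_traj_def by auto

lemma traj_unique:
  assumes tT: "t \<le> T" and A: "continuous_on {t..T} A"
    and x1: "is_traj T A f t x \<xi>1" and x2: "is_traj T A f t x \<xi>2"
    and s: "s \<in> {t..T}"
  shows "\<xi>1 s = \<xi>2 s"
proof -
  obtain \<alpha> where a: "\<alpha> \<ge> 0" "\<And>s y. s \<in> {t..T} \<Longrightarrow> norm (A s *v y) \<le> \<alpha> * norm y"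
    using mat_bound[OF A] by auto
  define \<eta> where "\<eta> r = \<xi>1 r - \<xi>2 r" for r
  have c\<eta>: "continuous_on {t..T} \<eta>"
    unfolding \<eta>_def using traj_cont[OF x1 tT] traj_cont[OF x2 tT] by (intro continuous_intros)
  have cA\<eta>: "continuous_on {t..T} (\<lambda>r. A r *v \<eta> r)" by (rule continuous_on_mv[OF A c\<eta>])
  have eq: "\<eta> s' = integral {t..s'} (\<lambda>r. A r *v \<eta> r)" if s': "s' \<in> {t..T}" for s'
  proof -
    have h1: "((\<lambda>r. A r *v \<xi>1 r + f r) has_integral (\<xi>1 s' - x)) {t..s'}"
      and h2: "((\<lambda>r. A r *v \<xi>2 r + f r) has_integral (\<xi>2 s' - x)) {t..s'}"
      using x1 x2 s' unfolding is_traj_def by auto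
    have "((\<lambda>r. (A r *v \<xi>1 r + f r) - (A r *v \<xi>2 r + f r)) has_integral (\<xi>1 s' - x) - (\<xi>2 s' - x)) {t..s'}"
      by (rule has_integral_diff[OF h1 h2])
    moreover have "(\<lambda>r. (A r *v \<xi>1 r + f r) - (A r *v \<xi>2 r + f r)) = (\<lambda>r. A r *v \<eta> r)"
      by (auto simp: \<eta>_def matrix_vector_mult_diff_distrib)
    ultimately show ?thesis by (simp add: \<eta>_def integral_unique)
  qed
  have "norm (\<eta> s) \<le> 0 * exp (\<alpha> * (s - t))"
  proof (rule gronwall[OF tT _ a(1) _ s])
    show "continuous_on {t..T} (\<lambda>r. norm (\<eta> r))" using c\<eta> by (intro continuous_intros)
    fix s' assume s': "s' \<in> {t..T}"
    have sub: "{t..s'} \<subseteq> {t..T}" using s' by auto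
    have "norm (\<eta> s') \<le> integral {t..s'} (\<lambda>r. \<alpha> * norm (\<eta> r))"
      unfolding eq[OF s']
    proof (rule integral_norm_bound_integral)
      show "(\<lambda>r. A r *v \<eta> r) integrable_on {t..s'}"
        by (rule integrable_continuous_interval, rule continuous_on_subset[OF cA\<eta> sub])
      show "(\<lambda>r. \<alpha> * norm (\<eta> r)) integrable_on {t..s'}"
        by (rule integrable_continuous_interval, rule continuous_on_subset[OF _ sub])
           (use c\<eta> in \<open>intro continuous_intros\<close>)
      fix r assume "r \<in> {t..s'}"
      then show "norm (A r *v \<eta> r) \<le> \<alpha> * norm (\<eta> r)" using a(2) s' by auto
    qed
    then show "norm (\<eta> s') \<le> 0 + \<alpha> * integral {t..s'} (\<lambda>r. norm (\<eta> r))" by simp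
  qed
  then show ?thesis by (simp add: \<eta>_def)
qed

lemma traj_bound:
  assumes tT: "t \<le> T" and A: "continuous_on {t..T} A" and a: "\<alpha> \<ge> 0"
    and aA: "\<And>s y. s \<in> {t..T} \<Longrightarrow> norm (A s *v y) \<le> \<alpha> * norm y"
    and F: "\<And>s. s \<in> {t..T} \<Longrightarrow> norm (f s) \<le> F"
    and xi: "is_traj T A f t x \<xi>" and s: "s \<in> {t..T}"
  shows "norm (\<xi> s) \<le> (norm x + F * (T - t)) * exp (\<alpha> * (T - t))"
proof -
  have "norm (f t) \<le> F" using F tT by auto
  then have F0: "F \<ge> 0" by (meson norm_ge_zero order_trans)
  have c\<xi>: "continuous_on {t..T} \<xi>" by (rule traj_cont[OF xi tT])
  have "norm (\<xi> s) \<le> (norm x + F * (T - t)) * exp (\<alpha> * (s - t))"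
  proof (rule gronwall[OF tT _ a _ s])
    show "continuous_on {t..T} (\<lambda>r. norm (\<xi> r))" using c\<xi> by (intro continuous_intros)
    fix s' assume s': "s' \<in> {t..T}"
    have sub: "{t..s'} \<subseteq> {t..T}" using s' by auto
    have iA: "(\<lambda>r. A r *v \<xi> r) integrable_on {t..s'}"
      using traj_Axi_int[OF xi _ _ _ A, of t s'] s' by auto
    have iF: "f integrable_on {t..s'}"
      using traj_f_int[OF xi _ _ _ A, of t s'] s' by auto
    have "\<xi> s' = x + (integral {t..s'} (\<lambda>r. A r *v \<xi> r) + integral {t..s'} f)"
      using traj_eq[OF xi s'] integral_add[OF iA iF] by simp
    then have "norm (\<xi> s') \<le> norm x + norm (integral {t..s'} (\<lambda>r. A r *v \<xi> r) + integral {t..s'} f)"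
      by (simp add: norm_triangle_ineq)
    also have "\<dots> \<le> norm x + (norm (integral {t..s'} (\<lambda>r. A r *v \<xi> r)) + norm (integral {t..s'} f))"
      by (simp add: norm_triangle_ineq)
    finally have "norm (\<xi> s') \<le> norm x + (norm (integral {t..s'} (\<lambda>r. A r *v \<xi> r)) + norm (integral {t..s'} f))" .
    moreover have "norm (integral {t..s'} (\<lambda>r. A r *v \<xi> r)) \<le> integral {t..s'} (\<lambda>r. \<alpha> * norm (\<xi> r))"
    proof (rule integral_norm_bound_integral[OF iA])
      show "(\<lambda>r. \<alpha> * norm (\<xi> r)) integrable_on {t..s'}"
        by (rule integrable_continuous_interval, rule continuous_on_subset[OF _ sub])
           (use c\<xi> in \<open>intro continuous_intros\<close>)
      fix r assume "r \<in> {t..s'}"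
      then show "norm (A r *v \<xi> r) \<le> \<alpha> * norm (\<xi> r)" using aA s' by auto
    qed
    moreover have "norm (integral {t..s'} f) \<le> F * (s' - t)"
      using has_integral_bound_real[OF F0 finite.emptyI integrable_integral[OF iF]] F s' by auto
    moreover have "F * (s' - t) \<le> F * (T - t)" using F0 s' by (intro mult_left_mono) auto
    ultimately show "norm (\<xi> s') \<le> norm x + F * (T - t) + \<alpha> * integral {t..s'} (\<lambda>r. norm (\<xi> r))"
      by simp
  qed
  also have "\<dots> \<le> (norm x + F * (T - t)) * exp (\<alpha> * (T - t))"
  proof (rule mult_left_mono)
    show "exp (\<alpha> * (s - t)) \<le> exp (\<alpha> * (T - t))" using s a by (simp add: mult_left_mono)
    show "0 \<le> norm x + F * (T - t)" using F0 tT by simp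
  qed
  finally show ?thesis .
qed


lemma poly_integral:
  fixes t s a C :: real
  assumes "t \<le> s" "a \<ge> 0"
  shows "((\<lambda>r. a * (C * (a * (r - t)) ^ k / fact k)) has_integral C * (a * (s - t)) ^ Suc k / fact (Suc k)) {t..s}"
proof -
  have "((\<lambda>r. a * (C * (a * (r - t)) ^ k / fact k)) has_integral
      C * (a * (s - t)) ^ Suc k / fact (Suc k) - C * (a * (t - t)) ^ Suc k / fact (Suc k)) {t..s}"
  proof (rule Henstock_Kurzweil_Integration.fundamental_theorem_of_calculus[OF assms(1)])
    fix r assume "r \<in> {t..s}"
    have "((\<lambda>r. C / fact (Suc k) * (a * (r - t)) ^ Suc k) has_real_derivative
        C / fact (Suc k) * (real (Suc k) * (a * (r - t)) ^ k * a)) (at r within {t..s})"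
    proof -
      have pw: "((\<lambda>r. (a * (r - t)) ^ n) has_real_derivative real n * (a * (r - t)) ^ (n - 1) * a) (at r within {t..s})" for n
        by (auto intro!: derivative_eq_intros)
      show ?thesis using DERIV_cmult[OF pw[of "Suc k"], of "C / fact (Suc k)"] by simp
    qed
    moreover have "C / fact (Suc k) * (real (Suc k) * (a * (r - t)) ^ k * a) = a * (C * (a * (r - t)) ^ k / fact k)"
      by (simp add: fact_Suc field_simps del: of_nat_Suc)
    moreover have "(\<lambda>r. C / fact (Suc k) * (a * (r - t)) ^ Suc k) = (\<lambda>r. C * (a * (r - t)) ^ Suc k / fact (Suc k))"
      by auto
    ultimately have "((\<lambda>r. C * (a * (r - t)) ^ Suc k / fact (Suc k)) has_real_derivative
        a * (C * (a * (r - t)) ^ k / fact k)) (at r within {t..s})"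
      by metis
    then show "((\<lambda>r. C * (a * (r - t)) ^ Suc k / fact (Suc k)) has_vector_derivative
        a * (C * (a * (r - t)) ^ k / fact k)) (at r within {t..s})"
      by (simp only: has_real_derivative_iff_has_vector_derivative)
  qed
  then show ?thesis by simp
qed

lemma traj_exists:
  fixes A :: "real \<Rightarrow> real^'n^'n" and f :: "real \<Rightarrow> real^'n"
  assumes tT: "t \<le> T" and A: "continuous_on {t..T} A" and fi: "f integrable_on {t..T}"
  shows "\<exists>\<xi>. is_traj T A f t x \<xi>"
proof -
  obtain \<alpha> where a: "\<alpha> \<ge> 0" "\<And>s y. s \<in> {t..T} \<Longrightarrow> norm (A s *v y) \<le> \<alpha> * norm y"
    using mat_bound[OF A] by auto
  have fsub: "f integrable_on {t..s}" if "s \<in> {t..T}" for s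
    by (rule integrable_subinterval_real[OF fi]) (use that in auto)
  obtain Cf where Cf: "Cf \<ge> 0" "\<And>s. s \<in> {t..T} \<Longrightarrow> norm (integral {t..s} f) \<le> Cf"
  proof -
    have "compact ((\<lambda>s. integral {t..s} f) ` {t..T})"
      by (rule compact_continuous_image[OF indefinite_integral_continuous_1[OF fi]]) simp
    then obtain R where "R > 0" "\<And>s. s \<in> {t..T} \<Longrightarrow> norm (integral {t..s} f) \<le> R"
      by (auto dest!: compact_imp_bounded simp: bounded_pos)
    then show ?thesis using that[of R] by auto
  qed
  define P where "P \<phi> = (\<lambda>s. x + integral {t..s} (\<lambda>r. A r *v \<phi> r + f r))" for \<phi> :: "real \<Rightarrow> real^'n"
  define sq where "sq k = (P ^^ k) (\<lambda>_. x)" for k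
  have sq0: "sq 0 = (\<lambda>_. x)" and sqS: "sq (Suc k) = P (sq k)" for k
    by (simp_all add: sq_def)
  have cA: "continuous_on {t..T} (\<lambda>r. A r *v \<phi> r)" if "continuous_on {t..T} \<phi>" for \<phi>
    by (rule continuous_on_mv[OF A that])
  have iA: "(\<lambda>r. A r *v \<phi> r) integrable_on {t..s}" if "continuous_on {t..T} \<phi>" "s \<in> {t..T}" for \<phi> s
    by (rule integrable_continuous_interval, rule continuous_on_subset[OF cA[OF that(1)]]) (use that in auto)
  have Pint: "P \<phi> s = x + integral {t..s} (\<lambda>r. A r *v \<phi> r) + integral {t..s} f"
    if "continuous_on {t..T} \<phi>" "s \<in> {t..T}" for \<phi> s
    unfolding P_def using integral_add[OF iA[OF that] fsub[OF that(2)]] by simp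
  have Pcont: "continuous_on {t..T} (P \<phi>)" if "continuous_on {t..T} \<phi>" for \<phi>
  proof -
    have "(\<lambda>r. A r *v \<phi> r + f r) integrable_on {t..T}"
      using iA[OF that, of T] fi tT by (intro integrable_add) auto
    then show ?thesis unfolding P_def
      by (intro continuous_intros indefinite_integral_continuous_1)
  qed
  have cont: "continuous_on {t..T} (sq k)" for k
    by (induction k) (simp_all add: sq0 sqS Pcont)
  define C0 where "C0 = \<alpha> * norm x * (T - t) + Cf"
  have C0: "C0 \<ge> 0" unfolding C0_def using a Cf tT by simp
  define D where "D k s = sq (Suc k) s - sq k s" for k s
  have cD: "continuous_on {t..T} (D k)" for k
    unfolding D_def using cont by (intro continuous_intros)
  have diff: "norm (D k s) \<le> C0 * (\<alpha> * (s - t)) ^ k / fact k" if "s \<in> {t..T}" for k s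
    using that
  proof (induction k arbitrary: s)
    case 0
    have "D 0 s = integral {t..s} (\<lambda>r. A r *v x) + integral {t..s} f"
      unfolding D_def using Pint[of "\<lambda>_. x" s] 0 by (simp add: sq0 sqS)
    then have "norm (D 0 s) \<le> norm (integral {t..s} (\<lambda>r. A r *v x)) + norm (integral {t..s} f)"
      by (simp add: norm_triangle_ineq)
    moreover have "norm (integral {t..s} (\<lambda>r. A r *v x)) \<le> \<alpha> * norm x * (s - t)"
    proof -
      have "norm (integral {t..s} (\<lambda>r. A r *v x)) \<le> \<alpha> * norm x * Henstock_Kurzweil_Integration.content {t..s}"
        by (rule has_integral_bound_real[OF _ finite.emptyI integrable_integral[OF iA]])
           (use 0 a in auto)
      then show ?thesis using 0 by simp
    qed
    moreover have "\<alpha> * norm x * (s - t) \<le> \<alpha> * norm x * (T - t)"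
      using 0 a by (intro mult_left_mono) auto
    ultimately show ?case using Cf(2)[OF 0] by (simp add: C0_def)
  next
    case (Suc k)
    have sub: "{t..s} \<subseteq> {t..T}" using Suc.prems by auto
    have "D (Suc k) s = integral {t..s} (\<lambda>r. A r *v sq (Suc k) r) - integral {t..s} (\<lambda>r. A r *v sq k r)"
      unfolding D_def using Pint[OF cont Suc.prems, of "Suc k"] Pint[OF cont Suc.prems, of k]
      by (simp add: sqS)
    also have "\<dots> = integral {t..s} (\<lambda>r. A r *v D k r)"
      unfolding D_def matrix_vector_mult_diff_distrib
      by (rule integral_diff[symmetric]) (use iA[OF cont Suc.prems] in auto)
    finally have eq: "D (Suc k) s = integral {t..s} (\<lambda>r. A r *v D k r)" .
    have "norm (integral {t..s} (\<lambda>r. A r *v D k r)) \<le> integral {t..s} (\<lambda>r. \<alpha> * (C0 * (\<alpha> * (r - t)) ^ k / fact k))"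
    proof (rule integral_norm_bound_integral)
      show "(\<lambda>r. A r *v D k r) integrable_on {t..s}" by (rule iA[OF cD Suc.prems])
      show "(\<lambda>r. \<alpha> * (C0 * (\<alpha> * (r - t)) ^ k / fact k)) integrable_on {t..s}"
        using poly_integral[of t s \<alpha> C0 k] Suc.prems a by auto
      fix r assume r: "r \<in> {t..s}"
      then have rT: "r \<in> {t..T}" using sub by auto
      have "norm (A r *v D k r) \<le> \<alpha> * norm (D k r)" by (rule a(2)[OF rT])
      also have "\<dots> \<le> \<alpha> * (C0 * (\<alpha> * (r - t)) ^ k / fact k)"
        using Suc.IH[OF rT] a by (intro mult_left_mono) auto
      finally show "norm (A r *v D k r) \<le> \<alpha> * (C0 * (\<alpha> * (r - t)) ^ k / fact k)" .
    qed
    also have "\<dots> = C0 * (\<alpha> * (s - t)) ^ Suc k / fact (Suc k)"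
      by (rule integral_unique[OF poly_integral]) (use Suc.prems a in auto)
    finally show ?case using eq by simp
  qed
  define M where "M k = C0 * (\<alpha> * (T - t)) ^ k / fact k" for k
  have M0: "M k \<ge> 0" for k unfolding M_def using C0 a tT by simp
  have "M = (\<lambda>n. C0 * (inverse (fact n) * (\<alpha> * (T - t)) ^ n))"
    by (auto simp: M_def fun_eq_iff field_simps)
  then have sM: "summable M"
    using summable_mult[OF summable_exp[of "\<alpha> * (T - t)"], of C0] by simp
  have DM: "norm (D k s) \<le> M k" if "s \<in> {t..T}" for k s
  proof -
    have "(\<alpha> * (s - t)) ^ k \<le> (\<alpha> * (T - t)) ^ k"
      using that a by (intro power_mono mult_left_mono) auto
    then have "C0 * (\<alpha> * (s - t)) ^ k / fact k \<le> M k"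
      unfolding M_def using C0 by (intro divide_right_mono mult_left_mono) auto
    then show ?thesis using diff[OF that, of k] by linarith
  qed
  have ul: "uniform_limit {t..T} (\<lambda>k s. \<Sum>i<k. D i s) (\<lambda>s. \<Sum>i. D i s) sequentially"
    by (rule Weierstrass_m_test[OF DM sM])
  define \<xi> where "\<xi> s = x + (\<Sum>i. D i s)" for s
  have sqsum: "sq k s = x + (\<Sum>i<k. D i s)" for k s
    unfolding D_def using sum_lessThan_telescope[of "\<lambda>i. sq i s" k] by (simp add: sq0)
  have lim: "(\<lambda>k. sq k s) \<longlonglongrightarrow> \<xi> s" if "s \<in> {t..T}" for s
    unfolding sqsum \<xi>_def by (intro tendsto_intros tendsto_uniform_limitI[OF ul that])
  have c\<xi>: "continuous_on {t..T} \<xi>"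
  proof -
    have "continuous_on {t..T} (\<lambda>s. \<Sum>i. D i s)"
      by (rule uniform_limit_theorem[OF _ ul]) (auto intro!: always_eventually continuous_on_sum cD)
    then show ?thesis unfolding \<xi>_def by (intro continuous_intros)
  qed
  define Mx where "Mx = norm x + suminf M"
  have sqb: "norm (sq k s) \<le> Mx" if "s \<in> {t..T}" for k s
  proof -
    have "norm (\<Sum>i<k. D i s) \<le> (\<Sum>i<k. norm (D i s))" by (rule norm_sum)
    also have "\<dots> \<le> (\<Sum>i<k. M i)" by (intro sum_mono DM that)
    also have "\<dots> \<le> suminf M" by (rule sum_le_suminf[OF sM]) (use M0 in auto)
    finally show ?thesis unfolding sqsum Mx_def by (meson add_left_mono norm_triangle_ineq order_trans)
  qed
  have "is_traj T A f t x \<xi>"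
    unfolding is_traj_def
  proof
    fix s assume s: "s \<in> {t..T}"
    have sub: "{t..s} \<subseteq> {t..T}" using s by auto
    have "((\<lambda>r. A r *v \<xi> r) has_integral (\<xi> s - x - integral {t..s} f)) {t..s}"
    proof (rule has_integral_dominated_convergence[where f="\<lambda>k r. A r *v sq k r"
          and y="\<lambda>k. integral {t..s} (\<lambda>r. A r *v sq k r)" and h="\<lambda>r. \<alpha> * Mx"])
      show "((\<lambda>r. A r *v sq k r) has_integral integral {t..s} (\<lambda>r. A r *v sq k r)) {t..s}" for k
        using iA[OF cont s] by auto
      show "(\<lambda>r. \<alpha> * Mx) integrable_on {t..s}" by (rule integrable_on_const) simp
      show "\<forall>r\<in>{t..s}. norm (A r *v sq k r) \<le> \<alpha> * Mx" for k
      proof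
        fix r assume "r \<in> {t..s}"
        then have r: "r \<in> {t..T}" using sub by auto
        have "norm (A r *v sq k r) \<le> \<alpha> * norm (sq k r)" by (rule a(2)[OF r])
        also have "\<dots> \<le> \<alpha> * Mx" using sqb[OF r] a by (intro mult_left_mono) auto
        finally show "norm (A r *v sq k r) \<le> \<alpha> * Mx" .
      qed
      show "\<forall>r\<in>{t..s}. (\<lambda>k. A r *v sq k r) \<longlonglongrightarrow> A r *v \<xi> r"
        using sub lim by (auto intro!: bounded_linear.tendsto[OF matrix_vector_mul_bounded_linear])
      have "(\<lambda>k. sq (Suc k) s - x - integral {t..s} f) \<longlonglongrightarrow> \<xi> s - x - integral {t..s} f"
        by (intro tendsto_intros LIMSEQ_Suc lim s)
      moreover have "sq (Suc k) s - x - integral {t..s} f = integral {t..s} (\<lambda>r. A r *v sq k r)" for k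
        using Pint[OF cont s, of k] by (simp add: sqS)
      ultimately show "(\<lambda>k. integral {t..s} (\<lambda>r. A r *v sq k r)) \<longlonglongrightarrow> \<xi> s - x - integral {t..s} f"
        by simp
    qed
    from has_integral_add[OF this integrable_integral[OF fsub[OF s]]]
    show "((\<lambda>r. A r *v \<xi> r + f r) has_integral \<xi> s - x) {t..s}" by simp
  qed
  then show ?thesis by blast
qed


lemma bm_leb: "(f::real\<Rightarrow>'a::topological_space) \<in> borel \<rightarrow>\<^sub>M M \<Longrightarrow> f \<in> lebesgue_on S \<rightarrow>\<^sub>M M"
  apply (rule measurable_restrict_space1)
  apply (rule measurable_completion)
  by (simp add: measurable_lborel1)

definition idx :: "real \<Rightarrow> real \<Rightarrow> nat \<Rightarrow> real \<Rightarrow> nat" where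
  "idx t T N s = min (N - 1) (nat \<lfloor>(s - t) / ((T - t) / real N)\<rfloor>)"

lemma idx_meas:
  fixes c :: "nat \<Rightarrow> 'a::topological_space"
  shows "(\<lambda>s. c (idx t T N s)) \<in> borel_measurable (lebesgue_on S)"
proof -
  define h where "h = (T - t) / real N"
  have "(\<lambda>s::real. (s - t) * inverse h) \<in> borel \<rightarrow>\<^sub>M borel"
    by (intro borel_measurable_continuous_onI continuous_intros)
  then have "(\<lambda>s::real. (s - t) / h) \<in> borel \<rightarrow>\<^sub>M borel"
    by (simp add: divide_inverse)
  from measurable_compose[OF this measurable_real_floor]
  have "(\<lambda>s. \<lfloor>(s - t) / h\<rfloor>) \<in> borel \<rightarrow>\<^sub>M count_space UNIV" .
  from measurable_compose[OF this measurable_count_space[of "\<lambda>z. min (N - 1) (nat z)"]]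
  have "(\<lambda>s. min (N - 1) (nat \<lfloor>(s - t) / h\<rfloor>)) \<in> borel \<rightarrow>\<^sub>M count_space UNIV" .
  then have "(\<lambda>s. min (N - 1) (nat \<lfloor>(s - t) / h\<rfloor>)) \<in> lebesgue_on S \<rightarrow>\<^sub>M count_space UNIV"
    by (rule bm_leb)
  then have "(\<lambda>s. c (min (N - 1) (nat \<lfloor>(s - t) / h\<rfloor>))) \<in> borel_measurable (lebesgue_on S)"
    by (rule measurable_compose) (simp add: measurable_count_space_eq1)
  then show ?thesis by (simp add: idx_def h_def)
qed

lemma idx_lt: "N \<ge> 1 \<Longrightarrow> idx t T N s < N"
  unfolding idx_def by auto

lemma idx_bounds:
  assumes tT: "t < T" and N: "N \<ge> 1" and s: "s \<in> {t..T}"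
  shows "t + real (idx t T N s) * ((T - t) / real N) \<le> s"
    and "s \<le> t + real (Suc (idx t T N s)) * ((T - t) / real N)"
proof -
  define h where "h = (T - t) / real N"
  have h: "h > 0" using tT N by (simp add: h_def)
  have q0: "(s - t) / h \<ge> 0" using s h by simp
  define k where "k = nat \<lfloor>(s - t) / h\<rfloor>"
  have kr: "real k = of_int \<lfloor>(s - t) / h\<rfloor>" using q0 by (simp add: k_def)
  have k1: "real k \<le> (s - t) / h" using kr by linarith
  have k2: "(s - t) / h < real k + 1" using kr by linarith
  have idxk: "idx t T N s = min (N - 1) k" by (simp add: idx_def k_def h_def)
  have "real (idx t T N s) \<le> real k" unfolding idxk by simp
  then have "real (idx t T N s) * h \<le> real k * h" using h by (intro mult_right_mono) auto
  also have "\<dots> \<le> s - t" using k1 h by (simp add: field_simps)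
  finally show "t + real (idx t T N s) * ((T - t) / real N) \<le> s" by (simp add: h_def)
  show "s \<le> t + real (Suc (idx t T N s)) * ((T - t) / real N)"
  proof (cases "k \<le> N - 1")
    case True
    then have "idx t T N s = k" using idxk by simp
    moreover have "s - t < (real k + 1) * h" using k2 h by (simp add: field_simps)
    ultimately show ?thesis by (simp add: h_def algebra_simps)
  next
    case False
    then have "idx t T N s = N - 1" using idxk by simp
    then have "real (Suc (idx t T N s)) = real N" using N by simp
    then show ?thesis using s N by simp
  qed
qed

lemma idx_eq:
  assumes tT: "t < T" and N: "N \<ge> 1" and j: "j < N"
    and lo: "t + real j * ((T - t) / real N) \<le> s" and hi: "s < t + real (Suc j) * ((T - t) / real N)"
  shows "idx t T N s = j"
proof -
  define h where "h = (T - t) / real N"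
  have h: "h > 0" using tT N by (simp add: h_def)
  have "real j \<le> (s - t) / h" using lo h by (simp add: h_def[symmetric] field_simps)
  moreover have "(s - t) / h < real j + 1" using hi h by (simp add: h_def[symmetric] field_simps)
  ultimately have "\<lfloor>(s - t) / h\<rfloor> = int j" by (simp add: floor_eq_iff)
  then show ?thesis using j by (simp add: idx_def h_def[symmetric])
qed

lemma continuous_on_pair_mv:
  "continuous_on UNIV (\<lambda>p::((real^'m^'n) \<times> (real^'m)). fst p *v snd p)"
  unfolding matrix_vector_mult_def
  by (intro continuous_on_vec_lambda continuous_intros continuous_on_component)

lemma meas_mv:
  fixes B :: "real \<Rightarrow> real^'m^'n"
  assumes "continuous_on S B" "S \<in> sets lebesgue" "u \<in> borel_measurable (lebesgue_on S)"
  shows "(\<lambda>r. B r *v u r) \<in> borel_measurable (lebesgue_on S)"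
proof -
  have "B \<in> borel_measurable (lebesgue_on S)"
    by (rule continuous_imp_measurable_on_sets_lebesgue[OF assms(1,2)])
  from borel_measurable_continuous_Pair[OF this assms(3), of "(*v)"] continuous_on_pair_mv
  show ?thesis by auto
qed

lemma bmeas_int:
  fixes f :: "real \<Rightarrow> 'a::euclidean_space"
  assumes "f \<in> borel_measurable (lebesgue_on {a..b})" "\<And>s. s \<in> {a..b} \<Longrightarrow> norm (f s) \<le> F"
  shows "f integrable_on {a..b}"
proof -
  have "integrable (lebesgue_on {a..b}) f"
    by (rule finite_measure.integrable_const_bound[OF finite_measure_lebesgue_on _ assms(1), of F])
       (use assms(2) in \<open>auto intro!: AE_I2 simp: space_lebesgue_on\<close>)
  then show ?thesis by (rule integrable_on_lebesgue_on) simp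
qed

lemma forcing_bound:
  fixes B :: "real \<Rightarrow> real^'m^'n" and E :: "real \<Rightarrow> real^'l^'n"
  assumes "continuous_on {0..T} B" "continuous_on {0..T} E" "bounded U" "bounded D"
  obtains F where "F \<ge> 0" "\<And>s u d. s \<in> {0..T} \<Longrightarrow> u \<in> U \<Longrightarrow> d \<in> D \<Longrightarrow> norm (B s *v u + E s *v d) \<le> F"
proof -
  obtain \<beta> where b: "\<beta> \<ge> 0" "\<And>s y. s \<in> {0..T} \<Longrightarrow> norm (B s *v y) \<le> \<beta> * norm y"
    using mat_bound[OF assms(1)] by auto
  obtain \<epsilon> where e: "\<epsilon> \<ge> 0" "\<And>s y. s \<in> {0..T} \<Longrightarrow> norm (E s *v y) \<le> \<epsilon> * norm y"
    using mat_bound[OF assms(2)] by auto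
  obtain RU where RU: "RU > 0" "\<And>u. u \<in> U \<Longrightarrow> norm u \<le> RU" using assms(3) by (auto simp: bounded_pos)
  obtain RD where RD: "RD > 0" "\<And>d. d \<in> D \<Longrightarrow> norm d \<le> RD" using assms(4) by (auto simp: bounded_pos)
  show ?thesis
  proof (rule that[of "\<beta> * RU + \<epsilon> * RD"])
    show "0 \<le> \<beta> * RU + \<epsilon> * RD" using b e RU RD by simp
    fix s u d assume s: "s \<in> {0..T}" and u: "u \<in> U" and d: "d \<in> D"
    have "norm (B s *v u + E s *v d) \<le> norm (B s *v u) + norm (E s *v d)" by (rule norm_triangle_ineq)
    also have "\<dots> \<le> \<beta> * norm u + \<epsilon> * norm d" using b(2)[OF s] e(2)[OF s] by (intro add_mono)
    also have "\<dots> \<le> \<beta> * RU + \<epsilon> * RD" using RU(2)[OF u] RD(2)[OF d] b e by (intro add_mono mult_left_mono)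
    finally show "norm (B s *v u + E s *v d) \<le> \<beta> * RU + \<epsilon> * RD" .
  qed
qed

lemma ctrl_meas_forcing:
  fixes B :: "real \<Rightarrow> real^'m^'n" and E :: "real \<Rightarrow> real^'l^'n"
  assumes "continuous_on {0..T} B" "continuous_on {0..T} E" "0 \<le> t"
    and u: "u \<in> ctrl_set t T U" and d: "d \<in> ctrl_set t T D"
  shows "(\<lambda>r. B r *v u r + E r *v d r) \<in> borel_measurable (lebesgue_on {t..T})"
proof -
  have cB: "continuous_on {t..T} B" "continuous_on {t..T} E"
    using assms(1,2,3) by (auto intro: continuous_on_subset)
  show ?thesis
    using meas_mv[OF cB(1) _, of u] meas_mv[OF cB(2) _, of d] u d
    by (intro borel_measurable_add) (auto simp: ctrl_set_def)
qed

lemma endpoint_traj: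
  fixes A :: "real \<Rightarrow> real^'n^'n"
  assumes tT: "t \<le> T" and A: "continuous_on {t..T} A" and xi: "is_traj T A (\<lambda>r. B r *v u r + E r *v d r) t x \<xi>"
  shows "endpoint T A B E t x u d = \<xi> T"
  unfolding endpoint_def
proof (rule the_equality)
  show "\<exists>\<xi>'. is_traj T A (\<lambda>r. B r *v u r + E r *v d r) t x \<xi>' \<and> \<xi>' T = \<xi> T" using xi by blast
  fix y assume "\<exists>\<xi>'. is_traj T A (\<lambda>r. B r *v u r + E r *v d r) t x \<xi>' \<and> \<xi>' T = y"
  then obtain \<xi>' where "is_traj T A (\<lambda>r. B r *v u r + E r *v d r) t x \<xi>'" "\<xi>' T = y" by blast
  then show "y = \<xi> T" using traj_unique[OF tT A _ xi, of \<xi>' T] tT by auto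
qed


lemma inner_transpose_mv:
  fixes M :: "real^'n^'m"
  shows "inner (transpose M *v a) b = inner a (M *v b)"
  by (simp add: transpose_matrix_vector dot_lmul_matrix)

lemma tele_mono:
  fixes G :: "real \<Rightarrow> real"
  assumes ab: "a \<le> b"
    and loc: "\<And>\<epsilon>. \<epsilon> > 0 \<Longrightarrow> \<exists>\<delta>>0. \<forall>s1 s2. a \<le> s1 \<longrightarrow> s1 \<le> s2 \<longrightarrow> s2 \<le> b \<longrightarrow> s2 - s1 < \<delta>
        \<longrightarrow> G s1 - G s2 \<le> \<epsilon> * (s2 - s1)"
  shows "G a \<le> G b"
proof (rule ccontr)
  assume neg: "\<not> G a \<le> G b"
  then have ab': "a < b" using ab by (cases "a = b") auto
  define \<epsilon> where "\<epsilon> = (G a - G b) / (2 * (b - a))"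
  have e: "\<epsilon> > 0" using neg ab' by (simp add: \<epsilon>_def)
  obtain \<delta> where d: "\<delta> > 0" "\<And>s1 s2. a \<le> s1 \<Longrightarrow> s1 \<le> s2 \<Longrightarrow> s2 \<le> b \<Longrightarrow> s2 - s1 < \<delta>
        \<Longrightarrow> G s1 - G s2 \<le> \<epsilon> * (s2 - s1)"
    using loc[OF e] by blast
  obtain N :: nat where N: "real N > (b - a) / \<delta>" using reals_Archimedean2 by blast
  have N1: "N \<ge> 1" using N ab' d(1) by (cases N) (auto simp: field_simps)
  define h where "h = (b - a) / real N"
  have h0: "h > 0" using ab' N1 by (simp add: h_def)
  have hd: "h < \<delta>" using N d(1) N1 ab' by (simp add: h_def field_simps)
  define s where "s j = a + real j * h" for j
  have sN: "s N = b" using N1 by (simp add: s_def h_def)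
  have step: "G (s j) - G (s (Suc j)) \<le> \<epsilon> * h" if "j < N" for j
  proof -
    have "a \<le> s j" using h0 by (simp add: s_def)
    moreover have "s j \<le> s (Suc j)" using h0 by (simp add: s_def algebra_simps)
    moreover have "s (Suc j) \<le> b"
    proof -
      have "real (Suc j) * h \<le> real N * h" using that h0 by (intro mult_right_mono) auto
      then show ?thesis using N1 by (simp add: s_def h_def)
    qed
    moreover have "s (Suc j) - s j = h" by (simp add: s_def algebra_simps)
    ultimately show ?thesis using d(2)[of "s j" "s (Suc j)"] hd by auto
  qed
  have "G a - G b = (\<Sum>j<N. G (s j) - G (s (Suc j)))"
    using sum_lessThan_telescope'[of "\<lambda>j. G (s j)" N] sN by (simp add: s_def)
  also have "\<dots> \<le> (\<Sum>j<N. \<epsilon> * h)" by (intro sum_mono step) auto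
  also have "\<dots> = \<epsilon> * (b - a)" using N1 by (simp add: h_def)
  also have "\<dots> = (G a - G b) / 2"
  proof -
    have nz: "2 * b - 2 * a \<noteq> 0" "b - a \<noteq> 0" using ab' by auto
    then show ?thesis by (simp add: \<epsilon>_def field_simps)
  qed
  finally show False using neg by simp
qed

lemma bounded_int_real:
  fixes g :: "real \<Rightarrow> real"
  assumes "g \<in> borel_measurable (lebesgue_on {a..b})" "\<And>s. s \<in> {a..b} \<Longrightarrow> \<bar>g s\<bar> \<le> F"
  shows "g integrable_on {a..b}"
  using bmeas_int[of g a b F] assms by auto

lemma lamf_int:
  fixes lam f :: "real \<Rightarrow> real^'n"
  assumes "continuous_on {a..b} lam" "f integrable_on {a..b}" "\<And>r. r \<in> {a..b} \<Longrightarrow> norm (f r) \<le> F"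
  shows "(\<lambda>r. inner (lam r) (f r)) integrable_on {a..b}"
proof -
  obtain L where L': "\<forall>x\<in>lam ` {a..b}. norm x \<le> L"
    using compact_imp_bounded[OF compact_continuous_image[OF assms(1)]] unfolding bounded_iff by blast
  then have L: "\<And>r. r \<in> {a..b} \<Longrightarrow> norm (lam r) \<le> L" by auto
  show ?thesis
  proof (rule bounded_int_real)
    show "(\<lambda>r. inner (lam r) (f r)) \<in> borel_measurable (lebesgue_on {a..b})"
      by (intro borel_measurable_inner continuous_imp_measurable_on_sets_lebesgue assms(1)
          integrable_imp_measurable assms(2)) auto
    fix s assume s: "s \<in> {a..b}"
    have "\<bar>inner (lam s) (f s)\<bar> \<le> norm (lam s) * norm (f s)" by (rule Cauchy_Schwarz_ineq2)
    also have "\<dots> \<le> L * F"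
    proof -
      have "0 \<le> L" using L[OF s] norm_ge_zero order_trans by blast
      then show ?thesis using L[OF s] assms(3)[OF s] by (intro mult_mono) auto
    qed
    finally show "\<bar>inner (lam s) (f s)\<bar> \<le> L * F" .
  qed
qed

lemma lam_cont:
  assumes "\<And>s. s \<in> S \<Longrightarrow> (lam has_vector_derivative lam' s) (at s within S)"
  shows "continuous_on S lam"
  using assms continuous_on_eq_continuous_within has_vector_derivative_continuous by blast

lemma G_local:
  fixes A :: "real \<Rightarrow> real^'n^'n" and lam :: "real \<Rightarrow> real^'n" and q hq :: "real \<Rightarrow> real"
  assumes t0: "0 \<le> t" and tT: "t \<le> T" and A: "continuous_on {0..T} A"
    and lam: "\<And>s. s \<in> {0..T} \<Longrightarrow> (lam has_vector_derivative (- (transpose (A s) *v lam s))) (at s within {0..T})"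
    and q: "\<And>s. s \<in> {0..T} \<Longrightarrow> (q has_real_derivative hq s) (at s within {0..T})"
    and xi: "is_traj T A f t x \<xi>"
    and F: "\<And>r. r \<in> {t..T} \<Longrightarrow> norm (f r) \<le> F"
    and e: "\<epsilon> > 0"
  shows "\<exists>\<delta>>0. \<forall>s1 s2. t \<le> s1 \<longrightarrow> s1 \<le> s2 \<longrightarrow> s2 \<le> T \<longrightarrow> s2 - s1 < \<delta> \<longrightarrow>
     \<bar>(inner (lam s2) (\<xi> s2) + q s2) - (inner (lam s1) (\<xi> s1) + q s1)
        - integral {s1..s2} (\<lambda>r. inner (lam r) (f r) + hq r)\<bar> \<le> \<epsilon> * (s2 - s1)"
proof -
  have sub: "{t..T} \<subseteq> {0..T}" using t0 by auto
  have At: "continuous_on {t..T} A" using A sub by (rule continuous_on_subset)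
  have cl0: "continuous_on {0..T} lam" by (rule lam_cont[OF lam])
  have cl: "continuous_on {t..T} lam" using cl0 sub by (rule continuous_on_subset)
  have cx: "continuous_on {t..T} \<xi>" by (rule traj_cont[OF xi tT])
  obtain \<alpha> where a: "\<alpha> \<ge> 0" "\<And>s y. s \<in> {0..T} \<Longrightarrow> norm (A s *v y) \<le> \<alpha> * norm y"
    using mat_bound[OF A] by auto
  obtain L where L': "L > 0" "\<forall>x\<in>lam ` {t..T}. norm x \<le> L"
    using compact_imp_bounded[OF compact_continuous_image[OF cl]] unfolding bounded_pos by blast
  then have L: "L \<ge> 0" "\<And>r. r \<in> {t..T} \<Longrightarrow> norm (lam r) \<le> L" by auto
  obtain M where M': "M > 0" "\<forall>x\<in>\<xi> ` {t..T}. norm x \<le> M"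
    using compact_imp_bounded[OF compact_continuous_image[OF cx]] unfolding bounded_pos by blast
  then have M: "M \<ge> 0" "\<And>r. r \<in> {t..T} \<Longrightarrow> norm (\<xi> r) \<le> M" by auto
  have F0: "F \<ge> 0" using F[of t] tT by (meson atLeastAtMost_iff norm_ge_zero order_refl order_trans)
  define K where "K = \<alpha> * M + L * \<alpha> + F + 1"
  have K: "K > 0" using a M L F0 by (simp add: K_def add_nonneg_pos)
  define \<eta> where "\<eta> = \<epsilon> / K"
  have eta: "\<eta> > 0" using e K by (simp add: \<eta>_def)
  obtain d1 where d1: "d1 > 0" "\<And>x x'. x \<in> {t..T} \<Longrightarrow> x' \<in> {t..T} \<Longrightarrow> dist x' x < d1 \<Longrightarrow> dist (lam x') (lam x) < \<eta>"
    using compact_uniformly_continuous[OF cl compact_Icc] eta unfolding uniformly_continuous_on_def by metis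
  obtain d2 where d2: "d2 > 0" "\<And>x x'. x \<in> {t..T} \<Longrightarrow> x' \<in> {t..T} \<Longrightarrow> dist x' x < d2 \<Longrightarrow> dist (\<xi> x') (\<xi> x) < \<eta>"
    using compact_uniformly_continuous[OF cx compact_Icc] eta unfolding uniformly_continuous_on_def by metis
  show ?thesis
  proof (intro exI[of _ "min d1 d2"] conjI allI impI)
    show "min d1 d2 > 0" using d1 d2 by simp
    fix s1 s2 assume s1: "t \<le> s1" and s12: "s1 \<le> s2" and s2: "s2 \<le> T" and sd: "s2 - s1 < min d1 d2"
    have subs: "{s1..s2} \<subseteq> {t..T}" using s1 s2 by auto
    have subs0: "{s1..s2} \<subseteq> {0..T}" using subs sub by auto
    have h1: "((\<lambda>r. - (transpose (A r) *v lam r)) has_integral lam s2 - lam s1) {s1..s2}"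
      by (rule Henstock_Kurzweil_Integration.fundamental_theorem_of_calculus[OF s12],
          rule has_vector_derivative_within_subset[OF lam]) (use subs0 in auto)
    have h1': "((\<lambda>r. inner (- (transpose (A r) *v lam r)) (\<xi> s2)) has_integral inner (lam s2 - lam s1) (\<xi> s2)) {s1..s2}"
      using has_integral_linear[OF h1 bounded_linear_inner_left[of "\<xi> s2"]] by (simp add: o_def)
    have h2: "((\<lambda>r. A r *v \<xi> r + f r) has_integral \<xi> s2 - \<xi> s1) {s1..s2}"
      by (rule traj_incr[OF xi s1 s12 s2])
    have h2': "((\<lambda>r. inner (lam s1) (A r *v \<xi> r + f r)) has_integral inner (lam s1) (\<xi> s2 - \<xi> s1)) {s1..s2}"
      using has_integral_linear[OF h2 bounded_linear_inner_right[of "lam s1"]] by (simp add: o_def)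
    have h3: "(hq has_integral q s2 - q s1) {s1..s2}"
      by (rule Henstock_Kurzweil_Integration.fundamental_theorem_of_calculus[OF s12],
          rule has_vector_derivative_within_subset[OF q[unfolded has_real_derivative_iff_has_vector_derivative]])
         (use subs0 in auto)
    have fi: "f integrable_on {s1..s2}" by (rule traj_f_int[OF xi s1 s12 s2 At])
    have i4: "(\<lambda>r. inner (lam r) (f r) + hq r) integrable_on {s1..s2}"
      by (intro integrable_add lamf_int[OF continuous_on_subset[OF cl subs] fi, of F])
         (use F subs h3 in auto)
    define g where "g r = inner (- (transpose (A r) *v lam r)) (\<xi> s2) + inner (lam s1) (A r *v \<xi> r + f r) + hq r
        - (inner (lam r) (f r) + hq r)" for r
    have hg: "(g has_integral (inner (lam s2 - lam s1) (\<xi> s2) + inner (lam s1) (\<xi> s2 - \<xi> s1) + (q s2 - q s1)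
        - integral {s1..s2} (\<lambda>r. inner (lam r) (f r) + hq r))) {s1..s2}"
      unfolding g_def
      by (intro has_integral_diff has_integral_add h1' h2' h3 integrable_integral i4)
    have eqI: "inner (lam s2 - lam s1) (\<xi> s2) + inner (lam s1) (\<xi> s2 - \<xi> s1) + (q s2 - q s1)
        - integral {s1..s2} (\<lambda>r. inner (lam r) (f r) + hq r)
       = (inner (lam s2) (\<xi> s2) + q s2) - (inner (lam s1) (\<xi> s1) + q s1)
        - integral {s1..s2} (\<lambda>r. inner (lam r) (f r) + hq r)"
      by (simp add: inner_diff_left inner_diff_right)
    have gb: "norm (g r) \<le> \<epsilon>" if r: "r \<in> {s1..s2}" for r
    proof -
      have rT: "r \<in> {t..T}" and r0: "r \<in> {0..T}" using r subs subs0 by auto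
      have s1T: "s1 \<in> {t..T}" and s2T: "s2 \<in> {t..T}" using s1 s12 s2 by auto
      have dl: "norm (lam s1 - lam r) \<le> \<eta>"
        using d1(2)[OF rT s1T] r sd by (auto simp: dist_norm abs_le_iff intro: less_imp_le)
      have dx: "norm (\<xi> r - \<xi> s2) \<le> \<eta>"
        using d2(2)[OF s2T rT] r sd by (auto simp: dist_norm abs_le_iff intro: less_imp_le)
      have geq: "g r = inner (lam s1 - lam r) (A r *v \<xi> r) + inner (lam r) (A r *v (\<xi> r - \<xi> s2))
          + inner (lam s1 - lam r) (f r)"
        unfolding g_def inner_minus_left inner_transpose_mv
        by (simp add: inner_diff_left inner_diff_right inner_add_right matrix_vector_mult_diff_distrib)
      have b1: "\<bar>inner (lam s1 - lam r) (A r *v \<xi> r)\<bar> \<le> \<eta> * (\<alpha> * M)"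
      proof -
        have "\<bar>inner (lam s1 - lam r) (A r *v \<xi> r)\<bar> \<le> norm (lam s1 - lam r) * norm (A r *v \<xi> r)"
          by (rule Cauchy_Schwarz_ineq2)
        also have "\<dots> \<le> \<eta> * (\<alpha> * M)"
        proof (rule mult_mono[OF dl])
          show "norm (A r *v \<xi> r) \<le> \<alpha> * M"
            using a(2)[OF r0, of "\<xi> r"] M(2)[OF rT] a(1) by (meson mult_left_mono order_trans)
        qed (use eta in auto)
        finally show ?thesis .
      qed
      have b2: "\<bar>inner (lam r) (A r *v (\<xi> r - \<xi> s2))\<bar> \<le> L * (\<alpha> * \<eta>)"
      proof -
        have "\<bar>inner (lam r) (A r *v (\<xi> r - \<xi> s2))\<bar> \<le> norm (lam r) * norm (A r *v (\<xi> r - \<xi> s2))"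
          by (rule Cauchy_Schwarz_ineq2)
        also have "\<dots> \<le> L * (\<alpha> * \<eta>)"
        proof (rule mult_mono[OF L(2)[OF rT]])
          show "norm (A r *v (\<xi> r - \<xi> s2)) \<le> \<alpha> * \<eta>"
            using a(2)[OF r0, of "\<xi> r - \<xi> s2"] dx a(1) by (meson mult_left_mono order_trans)
        qed (use a L eta in auto)
        finally show ?thesis .
      qed
      have b3: "\<bar>inner (lam s1 - lam r) (f r)\<bar> \<le> \<eta> * F"
      proof -
        have "\<bar>inner (lam s1 - lam r) (f r)\<bar> \<le> norm (lam s1 - lam r) * norm (f r)"
          by (rule Cauchy_Schwarz_ineq2)
        also have "\<dots> \<le> \<eta> * F" by (rule mult_mono[OF dl F[OF rT]]) (use eta in auto)
        finally show ?thesis .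
      qed
      have "norm (g r) \<le> \<eta> * (\<alpha> * M) + L * (\<alpha> * \<eta>) + \<eta> * F"
        using b1 b2 b3 unfolding geq real_norm_def by linarith
      also have "\<dots> \<le> \<eta> * K" using eta by (simp add: K_def algebra_simps)
      also have "\<dots> = \<epsilon>" using K by (simp add: \<eta>_def)
      finally show ?thesis .
    qed
    have "norm (inner (lam s2 - lam s1) (\<xi> s2) + inner (lam s1) (\<xi> s2 - \<xi> s1) + (q s2 - q s1)
        - integral {s1..s2} (\<lambda>r. inner (lam r) (f r) + hq r)) \<le> \<epsilon> * Henstock_Kurzweil_Integration.content {s1..s2}"
      by (rule has_integral_bound_real[OF _ finite.emptyI hg]) (use e gb in auto)
    then show "\<bar>(inner (lam s2) (\<xi> s2) + q s2) - (inner (lam s1) (\<xi> s1) + q s1)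
        - integral {s1..s2} (\<lambda>r. inner (lam r) (f r) + hq r)\<bar> \<le> \<epsilon> * (s2 - s1)"
      using s12 eqI by simp
  qed
qed


lemma AE_on_negligible:
  fixes a b :: real
  assumes "AE r in lebesgue_on {a..b}. P r"
  obtains N where "negligible N" "\<And>r. r \<in> {a..b} \<Longrightarrow> r \<notin> N \<Longrightarrow> P r"
proof -
  have "AE r in lebesgue. r \<in> {a..b} \<longrightarrow> P r"
  proof -
    have "{a..b} \<in> sets lebesgue" by simp
    then show ?thesis using assms by (subst (asm) AE_restrict_space_iff) auto
  qed
  then obtain N where "negligible N" "{r. \<not> (r \<in> {a..b} \<longrightarrow> P r)} \<subseteq> N"
    unfolding eventually_ae_filter_negligible by blast
  then show ?thesis using that by blast
qed

lemma integral_le_zero_ae: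
  fixes g :: "real \<Rightarrow> real"
  assumes "g integrable_on {s1..s2}" "negligible N" "\<And>r. r \<in> {s1..s2} \<Longrightarrow> r \<notin> N \<Longrightarrow> g r \<le> 0"
  shows "integral {s1..s2} g \<le> 0"
proof -
  define g' where "g' r = (if r \<in> N then 0 else g r)" for r
  have "(g' has_integral integral {s1..s2} g) {s1..s2}"
    by (rule has_integral_spike[OF assms(2) _ integrable_integral[OF assms(1)]]) (auto simp: g'_def)
  moreover have "((\<lambda>_. 0::real) has_integral 0) {s1..s2}" by simp
  ultimately show ?thesis
    by (rule has_integral_le) (use assms(3) in \<open>auto simp: g'_def\<close>)
qed

context
  fixes A :: "real \<Rightarrow> real^'n^'n" and lam :: "real \<Rightarrow> real^'n" and q hq :: "real \<Rightarrow> real"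
    and T t :: real and f \<xi> :: "real \<Rightarrow> real^'n" and x :: "real^'n" and F :: real
  assumes t0: "0 \<le> t" and tT: "t \<le> T" and A: "continuous_on {0..T} A"
    and lam: "\<And>s. s \<in> {0..T} \<Longrightarrow> (lam has_vector_derivative (- (transpose (A s) *v lam s))) (at s within {0..T})"
    and q: "\<And>s. s \<in> {0..T} \<Longrightarrow> (q has_real_derivative hq s) (at s within {0..T})"
    and xi: "is_traj T A f t x \<xi>"
    and F: "\<And>r. r \<in> {t..T} \<Longrightarrow> norm (f r) \<le> F"
begin

lemma G_int:
  assumes s1: "t \<le> s1" and s12: "s1 \<le> s2" and s2: "s2 \<le> T"
  shows "(\<lambda>r. inner (lam r) (f r) + hq r) integrable_on {s1..s2}"
proof -
  have subs0: "{s1..s2} \<subseteq> {0..T}" and subs: "{s1..s2} \<subseteq> {t..T}" using s1 s2 t0 by auto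
  have At: "continuous_on {t..T} A" using A t0 by (auto intro: continuous_on_subset)
  have cl: "continuous_on {s1..s2} lam"
    using lam_cont[OF lam] subs0 by (rule continuous_on_subset)
  have h3: "(hq has_integral q s2 - q s1) {s1..s2}"
    by (rule Henstock_Kurzweil_Integration.fundamental_theorem_of_calculus[OF s12],
        rule has_vector_derivative_within_subset[OF q[unfolded has_real_derivative_iff_has_vector_derivative]])
       (use subs0 in auto)
  have fi: "f integrable_on {s1..s2}" by (rule traj_f_int[OF xi s1 s12 s2 At])
  show ?thesis
    by (intro integrable_add lamf_int[OF cl fi, of F]) (use F subs h3 in auto)
qed

lemma G_lower:
  assumes c: "\<And>r. r \<in> {t..T} \<Longrightarrow> inner (lam r) (f r) + hq r \<ge> - c"
  shows "inner (lam t) (\<xi> t) + q t - c * (T - t) \<le> inner (lam T) (\<xi> T) + q T"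
proof -
  define G where "G s = inner (lam s) (\<xi> s) + q s + c * s" for s
  have "G t \<le> G T"
  proof (rule tele_mono[OF tT])
    fix \<epsilon> :: real assume e: "\<epsilon> > 0"
    obtain \<delta> where d: "\<delta> > 0" "\<And>s1 s2. t \<le> s1 \<Longrightarrow> s1 \<le> s2 \<Longrightarrow> s2 \<le> T \<Longrightarrow> s2 - s1 < \<delta> \<Longrightarrow>
     \<bar>(inner (lam s2) (\<xi> s2) + q s2) - (inner (lam s1) (\<xi> s1) + q s1)
        - integral {s1..s2} (\<lambda>r. inner (lam r) (f r) + hq r)\<bar> \<le> \<epsilon> * (s2 - s1)"
      using G_local[OF t0 tT A lam q xi F e] by blast
    show "\<exists>\<delta>>0. \<forall>s1 s2. t \<le> s1 \<longrightarrow> s1 \<le> s2 \<longrightarrow> s2 \<le> T \<longrightarrow> s2 - s1 < \<delta> \<longrightarrow> G s1 - G s2 \<le> \<epsilon> * (s2 - s1)"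
    proof (intro exI[of _ \<delta>] conjI allI impI)
      show "\<delta> > 0" by (rule d(1))
      fix s1 s2 assume s1: "t \<le> s1" and s12: "s1 \<le> s2" and s2: "s2 \<le> T" and sd: "s2 - s1 < \<delta>"
      have "integral {s1..s2} (\<lambda>_. - c) \<le> integral {s1..s2} (\<lambda>r. inner (lam r) (f r) + hq r)"
        by (rule integral_le[OF _ G_int[OF s1 s12 s2]]) (use c s1 s2 in auto)
      then have "- c * (s2 - s1) \<le> integral {s1..s2} (\<lambda>r. inner (lam r) (f r) + hq r)"
        using s12 by (simp add: mult.commute)
      then show "G s1 - G s2 \<le> \<epsilon> * (s2 - s1)"
        using d(2)[OF s1 s12 s2 sd] unfolding G_def by (simp add: algebra_simps abs_le_iff)
    qed
  qed
  then show ?thesis by (simp add: G_def algebra_simps)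
qed

lemma G_upper:
  assumes c: "AE r in lebesgue_on {t..T}. inner (lam r) (f r) + hq r \<le> 0"
  shows "inner (lam T) (\<xi> T) + q T \<le> inner (lam t) (\<xi> t) + q t"
proof -
  obtain N where N: "negligible N" "\<And>r. r \<in> {t..T} \<Longrightarrow> r \<notin> N \<Longrightarrow> inner (lam r) (f r) + hq r \<le> 0"
    using AE_on_negligible[OF c] by blast
  define G where "G s = - (inner (lam s) (\<xi> s) + q s)" for s
  have "G t \<le> G T"
  proof (rule tele_mono[OF tT])
    fix \<epsilon> :: real assume e: "\<epsilon> > 0"
    obtain \<delta> where d: "\<delta> > 0" "\<And>s1 s2. t \<le> s1 \<Longrightarrow> s1 \<le> s2 \<Longrightarrow> s2 \<le> T \<Longrightarrow> s2 - s1 < \<delta> \<Longrightarrow>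
     \<bar>(inner (lam s2) (\<xi> s2) + q s2) - (inner (lam s1) (\<xi> s1) + q s1)
        - integral {s1..s2} (\<lambda>r. inner (lam r) (f r) + hq r)\<bar> \<le> \<epsilon> * (s2 - s1)"
      using G_local[OF t0 tT A lam q xi F e] by blast
    show "\<exists>\<delta>>0. \<forall>s1 s2. t \<le> s1 \<longrightarrow> s1 \<le> s2 \<longrightarrow> s2 \<le> T \<longrightarrow> s2 - s1 < \<delta> \<longrightarrow> G s1 - G s2 \<le> \<epsilon> * (s2 - s1)"
    proof (intro exI[of _ \<delta>] conjI allI impI)
      show "\<delta> > 0" by (rule d(1))
      fix s1 s2 assume s1: "t \<le> s1" and s12: "s1 \<le> s2" and s2: "s2 \<le> T" and sd: "s2 - s1 < \<delta>"
      have "integral {s1..s2} (\<lambda>r. inner (lam r) (f r) + hq r) \<le> 0"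
        by (rule integral_le_zero_ae[OF G_int[OF s1 s12 s2] N(1)]) (use N(2) s1 s2 in auto)
      then show "G s1 - G s2 \<le> \<epsilon> * (s2 - s1)"
        using d(2)[OF s1 s12 s2 sd] unfolding G_def by (simp add: algebra_simps abs_le_iff)
    qed
  qed
  then show ?thesis by (simp add: G_def)
qed

end


lemma subgrad_ineq:
  fixes g :: "'a::real_inner \<Rightarrow> real"
  assumes cv: "convex_on UNIV g" and p: "p \<in> frechet_subdiff g xb"
  shows "g xb + inner p (y - xb) \<le> g y"
proof (rule ccontr)
  assume neg: "\<not> g xb + inner p (y - xb) \<le> g y"
  then have yx: "y \<noteq> xb" by auto
  have ny: "norm (y - xb) > 0" using yx by simp
  define \<kappa> where "\<kappa> = (g xb + inner p (y - xb) - g y) / norm (y - xb)"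
  have k: "\<kappa> > 0" using neg ny by (simp add: \<kappa>_def)
  have "0 \<le> Liminf (at xb) (\<lambda>x. ereal ((g x - g xb - inner p (x - xb)) / norm (x - xb)))"
    using p by (simp add: frechet_subdiff_def)
  then have all: "\<forall>y<0. \<forall>\<^sub>F x in at xb. y < ereal ((g x - g xb - inner p (x - xb)) / norm (x - xb))"
    unfolding le_Liminf_iff .
  have "ereal (- \<kappa>) < 0" using k by simp
  from all[rule_format, OF this]
  have "\<forall>\<^sub>F x in at xb. ereal (- \<kappa>) < ereal ((g x - g xb - inner p (x - xb)) / norm (x - xb))" .
  then have "\<forall>\<^sub>F x in at xb. - \<kappa> < (g x - g xb - inner p (x - xb)) / norm (x - xb)"
    by simp
  then obtain d where d: "d > 0" "\<And>x. x \<noteq> xb \<Longrightarrow> dist x xb < d \<Longrightarrow> - \<kappa> < (g x - g xb - inner p (x - xb)) / norm (x - xb)"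
    unfolding eventually_at by auto
  define \<tau> where "\<tau> = min 1 (d / (2 * norm (y - xb)))"
  have t0: "\<tau> > 0" and t1: "\<tau> \<le> 1" using d ny by (auto simp: \<tau>_def)
  have td: "\<tau> * norm (y - xb) < d"
  proof -
    have "\<tau> * norm (y - xb) \<le> d / (2 * norm (y - xb)) * norm (y - xb)"
      using ny by (intro mult_right_mono) (auto simp: \<tau>_def)
    also have "\<dots> = d / 2" using ny by simp
    finally show ?thesis using d by simp
  qed
  define z where "z = (1 - \<tau>) *\<^sub>R xb + \<tau> *\<^sub>R y"
  have zx: "z - xb = \<tau> *\<^sub>R (y - xb)" by (simp add: z_def algebra_simps)
  have nz: "norm (z - xb) = \<tau> * norm (y - xb)" using t0 by (simp add: zx)
  have zne: "z \<noteq> xb" using nz t0 ny by auto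
  have gz: "g z \<le> (1 - \<tau>) * g xb + \<tau> * g y"
    unfolding z_def by (rule convex_onD[OF cv]) (use t0 t1 in auto)
  have "- \<kappa> < (g z - g xb - inner p (z - xb)) / norm (z - xb)"
    by (rule d(2)[OF zne]) (simp add: dist_norm nz td)
  also have "\<dots> \<le> (\<tau> * (g y - g xb) - \<tau> * inner p (y - xb)) / (\<tau> * norm (y - xb))"
    unfolding nz using gz t0 ny by (intro divide_right_mono) (auto simp: zx algebra_simps)
  also have "\<dots> = - \<kappa>"
    using t0 ny by (simp add: \<kappa>_def field_simps)
  finally show False by simp
qed

lemma bounded_phi:
  fixes B :: "real^'m^'n" and E :: "real^'l^'n"
  assumes "bounded U" "bounded D"
  shows "\<exists>K. \<forall>u\<in>U. \<forall>d\<in>D. \<bar>inner lam (B *v u + E *v d)\<bar> \<le> K"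
proof -
  obtain RU where RU: "\<And>u. u \<in> U \<Longrightarrow> norm u \<le> RU" using assms(1) by (auto simp: bounded_iff)
  obtain RD where RD: "\<And>d. d \<in> D \<Longrightarrow> norm d \<le> RD" using assms(2) by (auto simp: bounded_iff)
  define CB where "CB = real CARD('n) * real CARD('m) * norm B"
  define CE where "CE = real CARD('n) * real CARD('l) * norm E"
  have CB: "CB \<ge> 0" "CE \<ge> 0" by (auto simp: CB_def CE_def)
  show ?thesis
  proof (intro exI ballI)
    fix u d assume u: "u \<in> U" and d: "d \<in> D"
    have "\<bar>inner lam (B *v u + E *v d)\<bar> \<le> norm lam * norm (B *v u + E *v d)" by (rule Cauchy_Schwarz_ineq2)
    also have "\<dots> \<le> norm lam * (CB * RU + CE * RD)"
    proof (rule mult_left_mono)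
      have "norm (B *v u + E *v d) \<le> norm (B *v u) + norm (E *v d)" by (rule norm_triangle_ineq)
      also have "\<dots> \<le> CB * norm u + CE * norm d"
        using mv_norm_le[of B u] mv_norm_le[of E d] by (simp add: CB_def CE_def)
      also have "\<dots> \<le> CB * RU + CE * RD"
        using RU[OF u] RD[OF d] CB by (intro add_mono mult_left_mono)
      finally show "norm (B *v u + E *v d) \<le> CB * RU + CE * RD" .
    qed simp
    finally show "\<bar>inner lam (B *v u + E *v d)\<bar> \<le> norm lam * (CB * RU + CE * RD)" .
  qed
qed

lemma hamil_ge:
  assumes U: "bounded U" and D: "bounded D" "D \<noteq> {}" and u: "u \<in> U" and ds: "ds \<in> D"
    and dmin: "\<And>d. d \<in> D \<Longrightarrow> inner (- lam) (E s *v ds) \<le> inner (- lam) (E s *v d) + \<eta>"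
  shows "inner (- lam) (B s *v u) + inner (- lam) (E s *v ds) - \<eta> \<le> hamil B E U D lam s"
proof -
  obtain K where K: "\<And>u d. u \<in> U \<Longrightarrow> d \<in> D \<Longrightarrow> \<bar>inner (- lam) (B s *v u + E s *v d)\<bar> \<le> K"
    using bounded_phi[OF U D(1), of "- lam" "B s" "E s"] by blast
  have bb: "bdd_below ((\<lambda>d. inner (- lam) (B s *v u' + E s *v d)) ` D)" if "u' \<in> U" for u'
  proof (rule bdd_belowI2[where m="- K"])
    fix d assume "d \<in> D"
    from K[OF that this] show "- K \<le> inner (- lam) (B s *v u' + E s *v d)" by linarith
  qed
  have ba: "bdd_above ((\<lambda>u'. INF d\<in>D. inner (- lam) (B s *v u' + E s *v d)) ` U)"
  proof -
    obtain d0 where d0: "d0 \<in> D" using D(2) by blast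
    have "(INF d\<in>D. inner (- lam) (B s *v u' + E s *v d)) \<le> K" if "u' \<in> U" for u'
      by (rule cINF_lower2[OF bb[OF that] d0]) (use K[OF that d0] in auto)
    then show ?thesis by (intro bdd_aboveI2[where M=K])
  qed
  have "inner (- lam) (B s *v u) + inner (- lam) (E s *v ds) - \<eta> \<le> (INF d\<in>D. inner (- lam) (B s *v u + E s *v d))"
  proof (rule cINF_greatest[OF D(2)])
    fix d assume "d \<in> D"
    from dmin[OF this] show "inner (- lam) (B s *v u) + inner (- lam) (E s *v ds) - \<eta> \<le> inner (- lam) (B s *v u + E s *v d)"
      unfolding inner_add_right by linarith
  qed
  also have "\<dots> \<le> hamil B E U D lam s"
    unfolding hamil_def by (rule cSUP_upper[OF u ba])
  finally show ?thesis .
qed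

lemma hamil_le:
  assumes U: "bounded U" "U \<noteq> {}" and D: "bounded D"
    and h: "\<And>u. u \<in> U \<Longrightarrow> \<exists>d\<in>D. inner (- lam) (B s *v u + E s *v d) \<le> c"
  shows "hamil B E U D lam s \<le> c"
  unfolding hamil_def
proof (rule cSUP_least[OF U(2)])
  fix u assume u: "u \<in> U"
  obtain K where K: "\<And>u d. u \<in> U \<Longrightarrow> d \<in> D \<Longrightarrow> \<bar>inner (- lam) (B s *v u + E s *v d)\<bar> \<le> K"
    using bounded_phi[OF U(1) D, of "- lam" "B s" "E s"] by blast
  have bb: "bdd_below ((\<lambda>d. inner (- lam) (B s *v u + E s *v d)) ` D)"
  proof (rule bdd_belowI2[where m="- K"])
    fix d assume "d \<in> D"
    from K[OF u this] show "- K \<le> inner (- lam) (B s *v u + E s *v d)" by linarith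
  qed
  obtain d where "d \<in> D" "inner (- lam) (B s *v u + E s *v d) \<le> c" using h[OF u] by blast
  then show "(INF d\<in>D. inner (- lam) (B s *v u + E s *v d)) \<le> c"
    by (intro cINF_lower2[OF bb])
qed


lemma argmax_exists:
  fixes D :: "'a::euclidean_space set"
  assumes "compact D" "D \<noteq> {}"
  shows "\<exists>d\<in>D. \<forall>d'\<in>D. inner w d' \<le> inner w d"
  by (rule continuous_attains_sup[OF assms]) (intro continuous_intros)

lemma near_max_sel:
  fixes w :: "real \<Rightarrow> 'a::euclidean_space" and D :: "'a set"
  assumes tT: "t \<le> T" and w: "continuous_on {t..T} w" and D: "compact D" "D \<noteq> {}" and e: "\<eta> > 0"
  obtains ds where "ds \<in> borel_measurable (lebesgue_on {t..T})" "\<And>r. r \<in> {t..T} \<Longrightarrow> ds r \<in> D"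
    "\<And>r d. r \<in> {t..T} \<Longrightarrow> d \<in> D \<Longrightarrow> inner (w r) d \<le> inner (w r) (ds r) + \<eta>"
proof -
  define am where "am s = (SOME d. d \<in> D \<and> (\<forall>d'\<in>D. inner (w s) d' \<le> inner (w s) d))" for s
  have am: "am s \<in> D" "\<And>d'. d' \<in> D \<Longrightarrow> inner (w s) d' \<le> inner (w s) (am s)" for s
  proof -
    have "\<exists>d. d \<in> D \<and> (\<forall>d'\<in>D. inner (w s) d' \<le> inner (w s) d)"
      using argmax_exists[OF D, of "w s"] by blast
    from someI_ex[OF this] show "am s \<in> D" "\<And>d'. d' \<in> D \<Longrightarrow> inner (w s) d' \<le> inner (w s) (am s)"
      unfolding am_def by blast+
  qed
  obtain RD where RD: "RD > 0" "\<And>d. d \<in> D \<Longrightarrow> norm d \<le> RD"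
    using compact_imp_bounded[OF D(1)] unfolding bounded_pos by blast
  obtain \<delta> where d: "\<delta> > 0" "\<And>x x'. x \<in> {t..T} \<Longrightarrow> x' \<in> {t..T} \<Longrightarrow> dist x' x < \<delta> \<Longrightarrow> dist (w x') (w x) < \<eta> / (2 * RD)"
    using compact_uniformly_continuous[OF w compact_Icc] e RD(1) unfolding uniformly_continuous_on_def
    by (metis divide_pos_pos mult_pos_pos zero_less_numeral)
  show ?thesis
  proof (cases "t = T")
    case True
    show ?thesis
    proof (rule that[of "\<lambda>_. am t"])
      show "(\<lambda>_. am t) \<in> borel_measurable (lebesgue_on {t..T})" by simp
      show "\<And>r. r \<in> {t..T} \<Longrightarrow> am t \<in> D" using am by auto
      fix r d assume "r \<in> {t..T}" "d \<in> D"
      then show "inner (w r) d \<le> inner (w r) (am t) + \<eta>" using True am(2)[of d t] e by auto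
    qed
  next
    case False
    then have tT': "t < T" using tT by simp
    obtain N :: nat where N: "real N > (T - t) / \<delta>" using reals_Archimedean2 by blast
    have N1: "N \<ge> 1" using N tT' d(1) by (cases N) (auto simp: field_simps)
    define h where "h = (T - t) / real N"
    have h0: "h > 0" using tT' N1 by (simp add: h_def)
    have hd: "h < \<delta>" using N d(1) N1 tT' by (simp add: h_def field_simps)
    define ds where "ds r = am (t + real (idx t T N r) * h)" for r
    show ?thesis
    proof (rule that[of ds])
      show "ds \<in> borel_measurable (lebesgue_on {t..T})"
        unfolding ds_def by (rule idx_meas)
      show "\<And>r. r \<in> {t..T} \<Longrightarrow> ds r \<in> D" using am by (auto simp: ds_def)
      fix r d assume r: "r \<in> {t..T}" and dD: "d \<in> D"
      define sj where "sj = t + real (idx t T N r) * h"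
      have b1: "sj \<le> r" and b2: "r \<le> sj + h"
        using idx_bounds[OF tT' N1 r] by (auto simp: sj_def h_def algebra_simps)
      have sjT: "sj \<in> {t..T}" using b1 r h0 by (auto simp: sj_def)
      have dist: "dist (w r) (w sj) < \<eta> / (2 * RD)"
        by (rule d(2)[OF sjT r]) (use b1 b2 hd in \<open>auto simp: dist_real_def\<close>)
      have i1: "inner (w r - w sj) d \<le> \<eta> / 2"
      proof -
        have "inner (w r - w sj) d \<le> norm (w r - w sj) * norm d" by (rule norm_cauchy_schwarz)
        also have "\<dots> \<le> \<eta> / (2 * RD) * RD"
          using dist RD(2)[OF dD] RD(1) e by (intro mult_mono) (auto simp: dist_norm)
        also have "\<dots> = \<eta> / 2" using RD(1) by simp
        finally show ?thesis .
      qed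
      have i2: "inner (w sj - w r) (am sj) \<le> \<eta> / 2"
      proof -
        have "inner (w sj - w r) (am sj) \<le> norm (w sj - w r) * norm (am sj)" by (rule norm_cauchy_schwarz)
        also have "\<dots> \<le> \<eta> / (2 * RD) * RD"
          using dist RD(2)[OF am(1)] RD(1) e by (intro mult_mono) (auto simp: dist_norm norm_minus_commute)
        also have "\<dots> = \<eta> / 2" using RD(1) by simp
        finally show ?thesis .
      qed
      have i3: "inner (w sj) d \<le> inner (w sj) (am sj)" by (rule am(2)[OF dD])
      have "ds r = am sj" by (simp add: ds_def sj_def)
      then show "inner (w r) d \<le> inner (w r) (ds r) + \<eta>"
        using i1 i2 i3 by (simp add: inner_diff_left)
    qed
  qed
qed


lemma continuous_on_transpose:
  "continuous_on S E \<Longrightarrow> continuous_on S (\<lambda>r. transpose (E r :: real^'m^'n))"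
  unfolding transpose_def by (intro continuous_on_vec_lambda continuous_on_component)

lemma lip_bounds:
  assumes "L-lipschitz_on UNIV g"
  shows "g y \<le> g 0 + L * norm y" "g 0 - L * norm y \<le> g y"
proof -
  have "dist (g y) (g 0) \<le> L * dist y 0" using assms unfolding lipschitz_on_def by blast
  then show "g y \<le> g 0 + L * norm y" "g 0 - L * norm y \<le> g y" by (auto simp: dist_real_def dist_norm)
qed

context
  fixes T :: real and A :: "real \<Rightarrow> real^'n^'n" and B :: "real \<Rightarrow> real^'m^'n" and E :: "real \<Rightarrow> real^'l^'n"
    and U :: "(real^'m) set" and D :: "(real^'l) set" and g :: "real^'n \<Rightarrow> real" and Lg :: real
  assumes T0: "T > 0" and Ac: "continuous_on {0..T} A" and Bc: "continuous_on {0..T} B"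
    and Ec: "continuous_on {0..T} E"
    and Uc: "compact U" "U \<noteq> {}" and Dc: "compact D" "D \<noteq> {}"
    and glip: "Lg-lipschitz_on UNIV g"
begin

lemma ctrl_const: "c \<in> S \<Longrightarrow> (\<lambda>_. c) \<in> ctrl_set t T S"
  by (simp add: ctrl_set_def)

lemma forcing_F: obtains F where "F \<ge> 0"
  "\<And>s u d. s \<in> {0..T} \<Longrightarrow> u \<in> U \<Longrightarrow> d \<in> D \<Longrightarrow> norm (B s *v u + E s *v d) \<le> F"
  using forcing_bound[OF Bc Ec compact_imp_bounded[OF Uc(1)] compact_imp_bounded[OF Dc(1)]] by blast

lemma forcing_int:
  assumes t: "t \<in> {0..T}" and u: "u \<in> ctrl_set t T U" and d: "d \<in> ctrl_set t T D"
  shows "(\<lambda>r. B r *v u r + E r *v d r) integrable_on {t..T}"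
proof -
  obtain F where F: "F \<ge> 0" "\<And>s u d. s \<in> {0..T} \<Longrightarrow> u \<in> U \<Longrightarrow> d \<in> D \<Longrightarrow> norm (B s *v u + E s *v d) \<le> F"
    using forcing_F by blast
  show ?thesis
  proof (rule bmeas_int)
    show "(\<lambda>r. B r *v u r + E r *v d r) \<in> borel_measurable (lebesgue_on {t..T})"
      by (rule ctrl_meas_forcing[OF Bc Ec _ u d]) (use t in auto)
    fix s assume "s \<in> {t..T}"
    then show "norm (B s *v u s + E s *v d s) \<le> F"
      using F(2)[of s "u s" "d s"] u d t by (auto simp: ctrl_set_def)
  qed
qed

lemma end_traj:
  assumes t: "t \<in> {0..T}" and u: "u \<in> ctrl_set t T U" and d: "d \<in> ctrl_set t T D"
  shows "\<exists>\<xi>. is_traj T A (\<lambda>r. B r *v u r + E r *v d r) t x \<xi> \<and> endpoint T A B E t x u d = \<xi> T"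
proof -
  have tT: "t \<le> T" using t by auto
  have At: "continuous_on {t..T} A" using Ac t by (auto intro: continuous_on_subset)
  obtain \<xi> where xi: "is_traj T A (\<lambda>r. B r *v u r + E r *v d r) t x \<xi>"
    using traj_exists[OF tT At forcing_int[OF t u d]] by blast
  then show ?thesis using endpoint_traj[OF tT At xi] by blast
qed

lemma end_bound:
  obtains M where "\<And>t u d. t \<in> {0..T} \<Longrightarrow> u \<in> ctrl_set t T U \<Longrightarrow> d \<in> ctrl_set t T D \<Longrightarrow>
     norm (endpoint T A B E t x u d) \<le> M"
proof -
  obtain F where F: "F \<ge> 0" "\<And>s u d. s \<in> {0..T} \<Longrightarrow> u \<in> U \<Longrightarrow> d \<in> D \<Longrightarrow> norm (B s *v u + E s *v d) \<le> F"
    using forcing_F by blast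
  obtain \<alpha> where a: "\<alpha> \<ge> 0" "\<And>s y. s \<in> {0..T} \<Longrightarrow> norm (A s *v y) \<le> \<alpha> * norm y"
    using mat_bound[OF Ac] by auto
  show ?thesis
  proof (rule that[of "(norm x + F * T) * exp (\<alpha> * T)"])
    fix t u d assume t: "t \<in> {0..T}" and u: "u \<in> ctrl_set t T U" and d: "d \<in> ctrl_set t T D"
    have tT: "t \<le> T" using t by auto
    have At: "continuous_on {t..T} A" using Ac t by (auto intro: continuous_on_subset)
    obtain \<xi> where xi: "is_traj T A (\<lambda>r. B r *v u r + E r *v d r) t x \<xi>" and ep: "endpoint T A B E t x u d = \<xi> T"
      using end_traj[OF t u d] by blast
    have "norm (\<xi> T) \<le> (norm x + F * (T - t)) * exp (\<alpha> * (T - t))"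
    proof (rule traj_bound[OF tT At a(1) _ _ xi])
      show "\<And>s y. s \<in> {t..T} \<Longrightarrow> norm (A s *v y) \<le> \<alpha> * norm y" using a(2) t by auto
      show "\<And>s. s \<in> {t..T} \<Longrightarrow> norm (B s *v u s + E s *v d s) \<le> F"
        using F(2) u d t by (auto simp: ctrl_set_def)
    qed (use tT in auto)
    also have "\<dots> \<le> (norm x + F * T) * exp (\<alpha> * T)"
    proof (rule mult_mono)
      show "norm x + F * (T - t) \<le> norm x + F * T" using F(1) t by (simp add: mult_left_mono)
      show "exp (\<alpha> * (T - t)) \<le> exp (\<alpha> * T)" using a(1) t by (simp add: mult_left_mono)
    qed (use F(1) T0 in auto)
    finally show "norm (endpoint T A B E t x u d) \<le> (norm x + F * T) * exp (\<alpha> * T)" using ep by simp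
  qed
qed

lemma nonanticip_const: "d0 \<in> D \<Longrightarrow> (\<lambda>_. \<lambda>_. d0) \<in> nonanticip t T U D"
  by (simp add: nonanticip_def ctrl_set_def)

lemma value_ge:
  assumes t: "t \<in> {0..T}" and del: "\<delta> \<in> nonanticip t T U D"
    and c: "\<And>u. u \<in> ctrl_set t T U \<Longrightarrow> c \<le> g (endpoint T A B E t x u (\<delta> u))"
  shows "c \<le> value_fn T A B E U D g t x"
proof -
  obtain M where M: "\<And>t u d. t \<in> {0..T} \<Longrightarrow> u \<in> ctrl_set t T U \<Longrightarrow> d \<in> ctrl_set t T D \<Longrightarrow>
     norm (endpoint T A B E t x u d) \<le> M" using end_bound by blast
  obtain u0 where u0: "u0 \<in> U" using Uc by blast
  have cne: "ctrl_set t T U \<noteq> {}" using ctrl_const[OF u0] by blast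
  have dc: "\<delta>' u \<in> ctrl_set t T D" if "\<delta>' \<in> nonanticip t T U D" "u \<in> ctrl_set t T U" for \<delta>' u
    using that by (auto simp: nonanticip_def)
  have Lg0: "Lg \<ge> 0" using glip by (simp add: lipschitz_on_def)
  have bb: "bdd_below ((\<lambda>u. g (endpoint T A B E t x u (\<delta>' u))) ` ctrl_set t T U)"
    if "\<delta>' \<in> nonanticip t T U D" for \<delta>'
  proof (rule bdd_belowI2[where m="g 0 - Lg * M"])
    fix u assume u: "u \<in> ctrl_set t T U"
    have "g 0 - Lg * M \<le> g 0 - Lg * norm (endpoint T A B E t x u (\<delta>' u))"
      using M[OF t u dc[OF that u]] Lg0 by (simp add: mult_left_mono)
    also have "\<dots> \<le> g (endpoint T A B E t x u (\<delta>' u))" by (rule lip_bounds(2)[OF glip])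
    finally show "g 0 - Lg * M \<le> g (endpoint T A B E t x u (\<delta>' u))" .
  qed
  have ba: "bdd_above ((\<lambda>\<delta>'. INF u\<in>ctrl_set t T U. g (endpoint T A B E t x u (\<delta>' u))) ` nonanticip t T U D)"
  proof (rule bdd_aboveI2[where M="g 0 + Lg * M"])
    fix \<delta>' assume d': "\<delta>' \<in> nonanticip t T U D"
    have u0c: "(\<lambda>_. u0) \<in> ctrl_set t T U" by (rule ctrl_const[OF u0])
    have "(INF u\<in>ctrl_set t T U. g (endpoint T A B E t x u (\<delta>' u))) \<le> g (endpoint T A B E t x (\<lambda>_. u0) (\<delta>' (\<lambda>_. u0)))"
      by (rule cINF_lower[OF bb[OF d'] u0c])
    also have "\<dots> \<le> g 0 + Lg * norm (endpoint T A B E t x (\<lambda>_. u0) (\<delta>' (\<lambda>_. u0)))" by (rule lip_bounds(1)[OF glip])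
    also have "\<dots> \<le> g 0 + Lg * M"
      using M[OF t u0c dc[OF d' u0c]] Lg0 by (simp add: mult_left_mono)
    finally show "(INF u\<in>ctrl_set t T U. g (endpoint T A B E t x u (\<delta>' u))) \<le> g 0 + Lg * M" .
  qed
  have "c \<le> (INF u\<in>ctrl_set t T U. g (endpoint T A B E t x u (\<delta> u)))"
    by (rule cINF_greatest[OF cne c])
  also have "\<dots> \<le> value_fn T A B E U D g t x"
    unfolding value_fn_def by (rule cSUP_upper[OF del ba])
  finally show ?thesis .
qed

lemma value_le:
  assumes t: "t \<in> {0..T}"
    and c: "\<And>\<delta> \<eta>. \<delta> \<in> nonanticip t T U D \<Longrightarrow> \<eta> > 0 \<Longrightarrow> \<exists>u\<in>ctrl_set t T U. g (endpoint T A B E t x u (\<delta> u)) \<le> c + \<eta>"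
  shows "value_fn T A B E U D g t x \<le> c"
  unfolding value_fn_def
proof (rule cSUP_least)
  obtain d0 where "d0 \<in> D" using Dc by blast
  then show "nonanticip t T U D \<noteq> {}" using nonanticip_const by blast
  fix \<delta> assume del: "\<delta> \<in> nonanticip t T U D"
  obtain M where M: "\<And>t u d. t \<in> {0..T} \<Longrightarrow> u \<in> ctrl_set t T U \<Longrightarrow> d \<in> ctrl_set t T D \<Longrightarrow>
     norm (endpoint T A B E t x u d) \<le> M" using end_bound by blast
  have Lg0: "Lg \<ge> 0" using glip by (simp add: lipschitz_on_def)
  have dc: "\<delta> u \<in> ctrl_set t T D" if "u \<in> ctrl_set t T U" for u
    using that del by (auto simp: nonanticip_def)
  have bb: "bdd_below ((\<lambda>u. g (endpoint T A B E t x u (\<delta> u))) ` ctrl_set t T U)"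
  proof (rule bdd_belowI2[where m="g 0 - Lg * M"])
    fix u assume u: "u \<in> ctrl_set t T U"
    have "g 0 - Lg * M \<le> g 0 - Lg * norm (endpoint T A B E t x u (\<delta> u))"
      using M[OF t u dc[OF u]] Lg0 by (simp add: mult_left_mono)
    also have "\<dots> \<le> g (endpoint T A B E t x u (\<delta> u))" by (rule lip_bounds(2)[OF glip])
    finally show "g 0 - Lg * M \<le> g (endpoint T A B E t x u (\<delta> u))" .
  qed
  show "(INF u\<in>ctrl_set t T U. g (endpoint T A B E t x u (\<delta> u))) \<le> c"
  proof (rule field_le_epsilon)
    fix \<eta> :: real assume e: "\<eta> > 0"
    obtain u where u: "u \<in> ctrl_set t T U" "g (endpoint T A B E t x u (\<delta> u)) \<le> c + \<eta>"
      using c[OF del e] by blast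
    show "(INF u\<in>ctrl_set t T U. g (endpoint T A B E t x u (\<delta> u))) \<le> c + \<eta>"
      using cINF_lower2[OF bb u(1)] u(2) by blast
  qed
qed

end


context
  fixes T :: real and A :: "real \<Rightarrow> real^'n^'n" and B :: "real \<Rightarrow> real^'m^'n" and E :: "real \<Rightarrow> real^'l^'n"
    and U :: "(real^'m) set" and D :: "(real^'l) set" and g :: "real^'n \<Rightarrow> real" and Lg :: real
  assumes T0: "T > 0" and Ac: "continuous_on {0..T} A" and Bc: "continuous_on {0..T} B"
    and Ec: "continuous_on {0..T} E"
    and Uc: "compact U" "U \<noteq> {}" and Dc: "compact D" "D \<noteq> {}"
    and glip: "Lg-lipschitz_on UNIV g"
begin

lemmas value_ge' = value_ge[OF T0 Ac Bc Ec Uc Dc glip]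
lemmas value_le' = value_le[OF T0 Ac Bc Ec Uc Dc glip]
lemmas end_traj' = end_traj[OF T0 Ac Bc Ec Uc Dc glip]
lemmas forcing_F' = forcing_F[OF T0 Ac Bc Ec Uc Dc glip]

lemma part_a_single:
  fixes lam :: "real \<Rightarrow> real^'n" and q :: "real \<Rightarrow> real"
  assumes t: "t \<in> {0..T}"
    and lam: "\<And>s. s \<in> {0..T} \<Longrightarrow> (lam has_vector_derivative (- (transpose (A s) *v lam s))) (at s within {0..T})"
    and q: "\<And>s. s \<in> {0..T} \<Longrightarrow> (q has_real_derivative hamil B E U D (lam s) s) (at s within {0..T})"
    and gcv: "convex_on UNIV g" and sub: "lam T \<in> frechet_subdiff g xb"
    and qT: "q T = - inner (lam T) xb + g xb"
  shows "inner (lam t) x + q t \<le> value_fn T A B E U D g t x"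
proof (rule field_le_epsilon)
  fix \<eta> :: real assume e: "\<eta> > 0"
  have tT: "t \<le> T" and t0: "0 \<le> t" using t by auto
  define \<eta>' where "\<eta>' = \<eta> / (T + 1)"
  have e': "\<eta>' > 0" using e T0 by (simp add: \<eta>'_def)
  have e'': "\<eta>' * (T - t) \<le> \<eta>"
  proof -
    have "\<eta>' * (T - t) \<le> \<eta>' * (T + 1)" using e' t0 by (intro mult_left_mono) auto
    also have "\<dots> = \<eta>" using T0 by (simp add: \<eta>'_def)
    finally show ?thesis .
  qed
  define w where "w r = transpose (E r) *v lam r" for r
  have cw: "continuous_on {t..T} w"
  proof -
    have "continuous_on {0..T} w" unfolding w_def
      by (intro continuous_on_mv continuous_on_transpose Ec lam_cont[OF lam])
    then show ?thesis by (rule continuous_on_subset) (use t0 in auto)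
  qed
  have wi: "inner (w r) d = inner (lam r) (E r *v d)" for r d
    unfolding w_def by (rule inner_transpose_mv)
  obtain ds where ds: "ds \<in> borel_measurable (lebesgue_on {t..T})" "\<And>r. r \<in> {t..T} \<Longrightarrow> ds r \<in> D"
    "\<And>r d. r \<in> {t..T} \<Longrightarrow> d \<in> D \<Longrightarrow> inner (w r) d \<le> inner (w r) (ds r) + \<eta>'"
    using near_max_sel[OF tT cw Dc e'] by blast
  have dsc: "ds \<in> ctrl_set t T D" using ds by (simp add: ctrl_set_def)
  have del: "(\<lambda>_. ds) \<in> nonanticip t T U D" using dsc by (simp add: nonanticip_def)
  obtain F where F: "F \<ge> 0" "\<And>s u d. s \<in> {0..T} \<Longrightarrow> u \<in> U \<Longrightarrow> d \<in> D \<Longrightarrow> norm (B s *v u + E s *v d) \<le> F"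
    using forcing_F' by blast
  have "inner (lam t) x + q t - \<eta> \<le> value_fn T A B E U D g t x"
  proof (rule value_ge'[OF t del])
    fix u assume u: "u \<in> ctrl_set t T U"
    obtain \<xi> where xi: "is_traj T A (\<lambda>r. B r *v u r + E r *v ds r) t x \<xi>"
      and ep: "endpoint T A B E t x u ds = \<xi> T"
      using end_traj'[OF t u dsc] by blast
    have Fb: "\<And>r. r \<in> {t..T} \<Longrightarrow> norm (B r *v u r + E r *v ds r) \<le> F"
      using F(2) u ds(2) t0 by (auto simp: ctrl_set_def)
    have low: "inner (lam t) (\<xi> t) + q t - \<eta>' * (T - t) \<le> inner (lam T) (\<xi> T) + q T"
    proof (rule G_lower[OF t0 tT Ac lam q xi Fb])
      fix r assume r: "r \<in> {t..T}"
      have ur: "u r \<in> U" using u r by (auto simp: ctrl_set_def)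
      have "inner (- lam r) (B r *v u r) + inner (- lam r) (E r *v ds r) - \<eta>' \<le> hamil B E U D (lam r) r"
      proof (rule hamil_ge[OF compact_imp_bounded[OF Uc(1)] compact_imp_bounded[OF Dc(1)] Dc(2) ur ds(2)[OF r]])
        fix d assume "d \<in> D"
        from ds(3)[OF r this] show "inner (- lam r) (E r *v ds r) \<le> inner (- lam r) (E r *v d) + \<eta>'"
          unfolding wi by simp
      qed
      then show "- \<eta>' \<le> inner (lam r) (B r *v u r + E r *v ds r) + hamil B E U D (lam r) r"
        by (simp add: inner_add_right)
    qed
    have "\<xi> t = x" by (rule traj_start[OF xi tT])
    moreover have "inner (lam T) (\<xi> T) + q T \<le> g (\<xi> T)"
      using subgrad_ineq[OF gcv sub, of "\<xi> T"] qT by (simp add: inner_diff_right)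
    ultimately show "inner (lam t) x + q t - \<eta> \<le> g (endpoint T A B E t x u ds)"
      using low e'' ep by simp
  qed
  then show "inner (lam t) x + q t \<le> value_fn T A B E U D g t x + \<eta>" by simp
qed

end


lemma int_le_const_fin:
  fixes f :: "real \<Rightarrow> real"
  assumes "(f has_integral i) {a..b}" "a \<le> b" "finite S" "\<And>x. x \<in> {a..b} - S \<Longrightarrow> f x \<le> c"
  shows "i \<le> c * (b - a)"
proof -
  define f' where "f' x = (if x \<in> S then c else f x)" for x
  have "(f' has_integral i) {a..b}"
    by (rule has_integral_spike_finite[OF assms(3) _ assms(1)]) (auto simp: f'_def)
  moreover have "((\<lambda>_. c) has_integral c * (b - a)) {a..b}"
    using has_integral_const_real[of c a b] assms(2) by (simp add: mult.commute)
  ultimately show ?thesis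
    by (rule has_integral_le) (use assms(4) in \<open>auto simp: f'_def\<close>)
qed

lemma traj_agree:
  fixes A :: "real \<Rightarrow> real^'n^'n"
  assumes ts: "t \<le> s" and sT: "s \<le> T" and A: "continuous_on {t..T} A"
    and x1: "is_traj T A f1 t x \<xi>1" and x2: "is_traj T A f2 t x \<xi>2"
    and N: "negligible N" and eq: "\<And>r. r \<in> {t..s} \<Longrightarrow> r \<notin> N \<Longrightarrow> f1 r = f2 r"
  shows "\<xi>1 s = \<xi>2 s"
proof -
  have As: "continuous_on {t..s} A" using A sT by (auto intro: continuous_on_subset)
  have y1: "is_traj s A f2 t x \<xi>1"
    unfolding is_traj_def
  proof
    fix s' assume s': "s' \<in> {t..s}"
    have h: "((\<lambda>r. A r *v \<xi>1 r + f1 r) has_integral \<xi>1 s' - x) {t..s'}"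
      using x1 s' sT unfolding is_traj_def by auto
    show "((\<lambda>r. A r *v \<xi>1 r + f2 r) has_integral \<xi>1 s' - x) {t..s'}"
      by (rule has_integral_spike[OF N _ h]) (use eq s' in auto)
  qed
  have y2: "is_traj s A f2 t x \<xi>2" by (rule traj_restrict[OF x2 sT])
  show ?thesis using traj_unique[OF ts As y1 y2, of s] ts by auto
qed

lemma AE_on_except_point:
  fixes a b :: real
  assumes "\<And>r. r \<in> {a..b} \<Longrightarrow> r \<noteq> c \<Longrightarrow> P r"
  shows "AE r in lebesgue_on {a..b}. P r"
proof (rule AE_I')
  show "{c} \<inter> {a..b} \<in> null_sets (lebesgue_on {a..b})"
    by (subst null_sets_restrict_space) (auto simp: negligible_iff_null_sets[symmetric] negligible_sing
        intro: negligible_subset[OF negligible_sing])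
  show "{r \<in> space (lebesgue_on {a..b}). \<not> P r} \<subseteq> {c} \<inter> {a..b}"
    using assms by (auto simp: space_lebesgue_on)
qed

lemma w_arg:
  fixes Br Bs :: "real^'m^'n" and Er :: "real^'l^'n"
  assumes om: "\<omega>0 \<in> mdiff ((\<lambda>u. Br *v u) ` U) ((\<lambda>d. - (Er *v d)) ` D)"
    and D: "compact D" "D \<noteq> {}" and d0: "d0 \<in> D" and uj: "uj \<in> U"
    and amin: "\<And>v. v \<in> U \<Longrightarrow> inner e (Bs *v uj) \<le> inner e (Bs *v v)"
    and RU: "\<And>v. v \<in> U \<Longrightarrow> norm v \<le> RU"
  shows "inner e (Br *v uj + Er *v d0 - \<omega>0) \<le> norm e * (real CARD('n) * real CARD('m) * norm (Br - Bs) * (2 * RU))"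
proof -
  obtain d' where d': "d' \<in> D" "\<And>d. d \<in> D \<Longrightarrow> inner e (Er *v d) \<le> inner e (Er *v d')"
  proof -
    have "continuous_on D (\<lambda>d. inner (transpose Er *v e) d)" by (intro continuous_intros)
    moreover have "(\<lambda>d. inner (transpose Er *v e) d) = (\<lambda>d. inner e (Er *v d))"
      by (rule ext, rule inner_transpose_mv)
    ultimately have "continuous_on D (\<lambda>d. inner e (Er *v d))" by simp
    from continuous_attains_sup[OF D this] show ?thesis using that by blast
  qed
  have "msum {\<omega>0} ((\<lambda>d. - (Er *v d)) ` D) \<subseteq> (\<lambda>u. Br *v u) ` U"
    using om by (simp add: mdiff_def)
  moreover have "\<omega>0 + - (Er *v d') \<in> msum {\<omega>0} ((\<lambda>d. - (Er *v d)) ` D)"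
    using d'(1) by (auto simp: msum_def)
  ultimately obtain u' where u': "u' \<in> U" "Br *v u' = \<omega>0 - Er *v d'" by force
  have om_eq: "\<omega>0 = Br *v u' + Er *v d'" using u'(2) by (simp add: algebra_simps)
  have "inner e (Br *v uj + Er *v d0 - \<omega>0) = inner e (Bs *v uj - Bs *v u') + inner e ((Br - Bs) *v (uj - u'))
      + (inner e (Er *v d0) - inner e (Er *v d'))"
    unfolding om_eq by (simp add: inner_diff_right inner_add_right matrix_vector_mult_diff_distrib
        matrix_vector_mult_diff_rdistrib algebra_simps)
  also have "\<dots> \<le> 0 + norm e * (real CARD('n) * real CARD('m) * norm (Br - Bs) * (2 * RU)) + 0"
  proof (intro add_mono)
    show "inner e (Bs *v uj - Bs *v u') \<le> 0" using amin[OF u'(1)] by (simp add: inner_diff_right)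
    show "inner e (Er *v d0) - inner e (Er *v d') \<le> 0" using d'(2)[OF d0] by simp
    have "inner e ((Br - Bs) *v (uj - u')) \<le> norm e * norm ((Br - Bs) *v (uj - u'))" by (rule norm_cauchy_schwarz)
    also have "\<dots> \<le> norm e * (real CARD('n) * real CARD('m) * norm (Br - Bs) * (2 * RU))"
    proof (rule mult_left_mono)
      have "norm ((Br - Bs) *v (uj - u')) \<le> real CARD('n) * real CARD('m) * norm (Br - Bs) * norm (uj - u')"
        by (rule mv_norm_le)
      also have "\<dots> \<le> real CARD('n) * real CARD('m) * norm (Br - Bs) * (2 * RU)"
      proof (rule mult_left_mono)
        have "norm (uj - u') \<le> norm uj + norm u'" by (rule norm_triangle_ineq4)
        also have "\<dots> \<le> 2 * RU" using RU[OF uj] RU[OF u'(1)] by simp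
        finally show "norm (uj - u') \<le> 2 * RU" .
      qed simp
      finally show "norm ((Br - Bs) *v (uj - u')) \<le> real CARD('n) * real CARD('m) * norm (Br - Bs) * (2 * RU)" .
    qed simp
    finally show "inner e ((Br - Bs) *v (uj - u')) \<le> norm e * (real CARD('n) * real CARD('m) * norm (Br - Bs) * (2 * RU))" .
  qed
  finally show ?thesis by simp
qed


lemma norm_add_sq: "norm (x + y :: 'a::real_inner) ^ 2 = norm x ^ 2 + 2 * inner x y + norm y ^ 2"
  by (simp add: power2_norm_eq_inner inner_add_left inner_add_right inner_commute)

lemma step_est:
  fixes A :: "real \<Rightarrow> real^'n^'n" and f \<omega> :: "real \<Rightarrow> real^'n"
  assumes sj: "t \<le> sj" "sj \<le> sj1" "sj1 \<le> T" and hdef: "sj1 - sj = h"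
    and aA: "\<And>r y. r \<in> {t..T} \<Longrightarrow> norm (A r *v y) \<le> \<alpha> * norm y" and a0: "\<alpha> \<ge> 0"
    and xi: "is_traj T A f t x0 \<xi>"
    and xs: "is_traj T A \<omega> t x0 \<xi>s"
    and Me: "\<And>r. r \<in> {t..T} \<Longrightarrow> norm (\<xi> r - \<xi>s r) \<le> Me"
    and K: "\<And>r. r \<in> {t..T} \<Longrightarrow> norm (A r *v (\<xi> r - \<xi>s r) + (f r - \<omega> r)) \<le> K"
    and pw: "\<And>r. r \<in> {sj..<sj1} \<Longrightarrow> inner (\<xi> sj - \<xi>s sj) (f r - \<omega> r) \<le> \<rho>"
  shows "norm (\<xi> sj1 - \<xi>s sj1) ^ 2 \<le> (1 + 2 * \<alpha> * h) * norm (\<xi> sj - \<xi>s sj) ^ 2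
           + (2 * \<alpha> * Me * K * h ^ 2 + 2 * h * \<rho> + K ^ 2 * h ^ 2)"
proof -
  define e where "e r = \<xi> r - \<xi>s r" for r
  define \<Phi> where "\<Phi> r = A r *v e r + (f r - \<omega> r)" for r
  have tT: "t \<le> T" using sj by auto
  have hE: "(\<Phi> has_integral e s2 - e s1) {s1..s2}" if "t \<le> s1" "s1 \<le> s2" "s2 \<le> T" for s1 s2
  proof -
    have "((\<lambda>r. (A r *v \<xi> r + f r) - (A r *v \<xi>s r + \<omega> r)) has_integral (\<xi> s2 - \<xi> s1) - (\<xi>s s2 - \<xi>s s1)) {s1..s2}"
      by (intro has_integral_diff traj_incr[OF xi that] traj_incr[OF xs that])
    moreover have "(\<lambda>r. (A r *v \<xi> r + f r) - (A r *v \<xi>s r + \<omega> r)) = \<Phi>"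
      by (rule ext) (simp add: \<Phi>_def e_def matrix_vector_mult_diff_distrib algebra_simps)
    moreover have "(\<xi> s2 - \<xi> s1) - (\<xi>s s2 - \<xi>s s1) = e s2 - e s1" by (simp add: e_def)
    ultimately show ?thesis by simp
  qed
  have K0: "K \<ge> 0" using K[of t] tT by (meson atLeastAtMost_iff norm_ge_zero order_refl order_trans)
  have Kb: "\<And>r. r \<in> {t..T} \<Longrightarrow> norm (\<Phi> r) \<le> K" using K by (simp add: \<Phi>_def e_def)
  have h0: "h \<ge> 0" using sj hdef by simp
  define \<Delta> where "\<Delta> = e sj1 - e sj"
  have hD: "(\<Phi> has_integral \<Delta>) {sj..sj1}" unfolding \<Delta>_def by (rule hE[OF sj])
  have nD: "norm \<Delta> \<le> K * h"
    using has_integral_bound_real[OF K0 finite.emptyI hD] Kb sj hdef by auto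
  have er: "norm (e r) \<le> norm (e sj) + K * h" if r: "r \<in> {sj..sj1}" for r
  proof -
    have "norm (e r - e sj) \<le> K * Henstock_Kurzweil_Integration.content {sj..r}"
      by (rule has_integral_bound_real[OF K0 finite.emptyI hE]) (use r sj Kb in auto)
    also have "\<dots> \<le> K * h" using r hdef K0 by (intro mult_left_mono) auto
    finally have "norm (e r - e sj) \<le> K * h" .
    then show ?thesis by (metis add.commute norm_triangle_sub order_trans add_right_mono)
  qed
  define a where "a = norm (e sj) ^ 2"
  have neMe: "norm (e sj) \<le> Me" using Me sj by (simp add: e_def)
  define cst where "cst = \<alpha> * a + \<alpha> * Me * K * h + \<rho>"
  have pt: "inner (e sj) (\<Phi> r) \<le> cst" if r: "r \<in> {sj..sj1} - {sj1}" for r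
  proof -
    have rT: "r \<in> {t..T}" using r sj by auto
    have "inner (e sj) (A r *v e r) \<le> norm (e sj) * norm (A r *v e r)" by (rule norm_cauchy_schwarz)
    also have "\<dots> \<le> norm (e sj) * (\<alpha> * (norm (e sj) + K * h))"
    proof (rule mult_left_mono)
      have "norm (A r *v e r) \<le> \<alpha> * norm (e r)" by (rule aA[OF rT])
      also have "\<dots> \<le> \<alpha> * (norm (e sj) + K * h)" using er[of r] r a0 by (intro mult_left_mono) auto
      finally show "norm (A r *v e r) \<le> \<alpha> * (norm (e sj) + K * h)" .
    qed simp
    also have "\<dots> = \<alpha> * a + \<alpha> * norm (e sj) * K * h" by (simp add: a_def power2_eq_square algebra_simps)
    also have "\<dots> \<le> \<alpha> * a + \<alpha> * Me * K * h"
      using neMe a0 K0 h0 by (intro add_left_mono mult_right_mono mult_left_mono) auto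
    finally have i1: "inner (e sj) (A r *v e r) \<le> \<alpha> * a + \<alpha> * Me * K * h" .
    have i2: "inner (e sj) (f r - \<omega> r) \<le> \<rho>" using pw[of r] r by (simp add: e_def)
    show ?thesis using i1 i2 by (simp add: \<Phi>_def cst_def inner_add_right)
  qed
  have iD: "inner (e sj) \<Delta> \<le> cst * (sj1 - sj)"
  proof (rule int_le_const_fin[OF _ sj(2), where S="{sj1}"])
    show "((\<lambda>r. inner (e sj) (\<Phi> r)) has_integral inner (e sj) \<Delta>) {sj..sj1}"
      using has_integral_linear[OF hD bounded_linear_inner_right[of "e sj"]] by (simp add: o_def)
  qed (use pt in auto)
  have "norm (e sj1) ^ 2 = norm (e sj + \<Delta>) ^ 2" by (simp add: \<Delta>_def)
  also have "\<dots> = a + 2 * inner (e sj) \<Delta> + norm \<Delta> ^ 2" by (simp add: norm_add_sq a_def)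
  also have "\<dots> \<le> a + 2 * (cst * h) + (K * h) ^ 2"
    using iD hdef nD by (intro add_mono power_mono) auto
  also have "\<dots> = (1 + 2 * \<alpha> * h) * a + (2 * \<alpha> * Me * K * h ^ 2 + 2 * h * \<rho> + K ^ 2 * h ^ 2)"
    by (simp add: cst_def power2_eq_square algebra_simps)
  finally show ?thesis by (simp add: e_def a_def)
qed


lemma rec_growth:
  fixes a :: "nat \<Rightarrow> real"
  assumes st: "\<And>j. j < N \<Longrightarrow> a (Suc j) \<le> (1 + \<beta>) * a j + c" and a0: "a 0 \<le> 0"
    and b: "\<beta> \<ge> 0" and c: "c \<ge> 0"
  shows "j \<le> N \<Longrightarrow> a j \<le> (1 + \<beta>) ^ j * real j * c"
proof (induction j)
  case 0
  then show ?case using a0 by simp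
next
  case (Suc j)
  have "a (Suc j) \<le> (1 + \<beta>) * a j + c" using st Suc.prems by simp
  also have "\<dots> \<le> (1 + \<beta>) * ((1 + \<beta>) ^ j * real j * c) + c"
    using Suc b by (intro add_right_mono mult_left_mono) auto
  also have "\<dots> \<le> (1 + \<beta>) ^ Suc j * real j * c + (1 + \<beta>) ^ Suc j * c"
  proof -
    have p1: "1 \<le> (1 + \<beta>) ^ Suc j" using b by (intro one_le_power) simp
    have "c \<le> (1 + \<beta>) ^ Suc j * c" using mult_right_mono[OF p1 c] by simp
    then show ?thesis by (simp add: mult.assoc)
  qed
  also have "\<dots> = (1 + \<beta>) ^ Suc j * real (Suc j) * c" by (simp add: algebra_simps)
  finally show ?case .
qed

lemma pow_le_exp:
  fixes \<beta> :: real
  assumes "\<beta> \<ge> 0"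
  shows "(1 + \<beta>) ^ N \<le> exp (real N * \<beta>)"
proof -
  have "(1 + \<beta>) ^ N \<le> exp \<beta> ^ N"
    using assms exp_ge_add_one_self[of \<beta>] by (intro power_mono) auto
  also have "\<dots> = exp (real N * \<beta>)" by (simp add: exp_of_nat_mult)
  finally show ?thesis .
qed

lemma rec_upd_props:
  fixes upd :: "nat \<Rightarrow> (nat \<Rightarrow> 'a) \<Rightarrow> 'a" and c0 :: "nat \<Rightarrow> 'a"
  defines "cs \<equiv> rec_nat c0 (\<lambda>j c. c(j := upd j c))"
  shows rec_upd_Suc: "cs (Suc j) = (cs j)(j := upd j (cs j))"
    and rec_upd_fix: "i < j \<Longrightarrow> cs j i = upd i (cs i)"
    and rec_upd_agree: "l < i \<Longrightarrow> i \<le> j \<Longrightarrow> cs j l = cs i l"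
proof -
  show S: "cs (Suc j) = (cs j)(j := upd j (cs j))" for j by (simp add: cs_def)
  show F: "i < j \<Longrightarrow> cs j i = upd i (cs i)" for i j
  proof (induction j)
    case 0 then show ?case by simp
  next
    case (Suc j)
    show ?case
    proof (cases "i = j")
      case True then show ?thesis by (simp add: S)
    next
      case False then show ?thesis using Suc by (simp add: S)
    qed
  qed
  show "l < i \<Longrightarrow> i \<le> j \<Longrightarrow> cs j l = cs i l" using F[of l j] F[of l i] by simp
qed

lemma argmin_mv:
  fixes M :: "real^'m^'n" and U :: "(real^'m) set"
  assumes "compact U" "U \<noteq> {}"
  shows "\<exists>u\<in>U. \<forall>v'\<in>U. inner v (M *v u) \<le> inner v (M *v v')"
proof -
  have "continuous_on U (\<lambda>u. inner (transpose M *v v) u)" by (intro continuous_intros)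
  moreover have "(\<lambda>u. inner (transpose M *v v) u) = (\<lambda>u. inner v (M *v u))"
    by (rule ext, rule inner_transpose_mv)
  ultimately have "continuous_on U (\<lambda>u. inner v (M *v u))" by simp
  from continuous_attains_inf[OF assms this] show ?thesis .
qed

lemma wset_bound:
  fixes B :: "real \<Rightarrow> real^'m^'n" and E :: "real \<Rightarrow> real^'l^'n"
  assumes "\<omega>0 \<in> Wset B E U D r" "d0 \<in> D"
    and F: "\<And>u d. u \<in> U \<Longrightarrow> d \<in> D \<Longrightarrow> norm (B r *v u + E r *v d) \<le> F"
  shows "norm \<omega>0 \<le> F"
proof -
  have "msum {\<omega>0} ((\<lambda>d. - (E r *v d)) ` D) \<subseteq> (\<lambda>u. B r *v u) ` U"
    using assms(1) by (simp add: Wset_def mdiff_def)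
  moreover have "\<omega>0 + - (E r *v d0) \<in> msum {\<omega>0} ((\<lambda>d. - (E r *v d)) ` D)"
    using assms(2) by (auto simp: msum_def)
  ultimately obtain u' where u': "u' \<in> U" "B r *v u' = \<omega>0 - E r *v d0" by force
  have "\<omega>0 = B r *v u' + E r *v d0" using u'(2) by (simp add: algebra_simps)
  then show ?thesis using F[OF u'(1) assms(2)] by simp
qed


context
  fixes T :: real and A :: "real \<Rightarrow> real^'n^'n" and B :: "real \<Rightarrow> real^'m^'n" and E :: "real \<Rightarrow> real^'l^'n"
    and U :: "(real^'m) set" and D :: "(real^'l) set" and g :: "real^'n \<Rightarrow> real" and Lg :: real
  assumes T0: "T > 0" and Ac: "continuous_on {0..T} A" and Bc: "continuous_on {0..T} B"
    and Ec: "continuous_on {0..T} E"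
    and Uc: "compact U" "U \<noteq> {}" and Dc: "compact D" "D \<noteq> {}"
    and glip: "Lg-lipschitz_on UNIV g"
begin

lemmas value_le'' = value_le[OF T0 Ac Bc Ec Uc Dc glip]
lemmas end_traj'' = end_traj[OF T0 Ac Bc Ec Uc Dc glip]
lemmas forcing_F'' = forcing_F[OF T0 Ac Bc Ec Uc Dc glip]

lemma part_b_upper:
  fixes \<omega> \<xi>s :: "real \<Rightarrow> real^'n"
  assumes t: "t \<in> {0..T}" and om: "\<And>s. s \<in> {t..T} \<Longrightarrow> \<omega> s \<in> Wset B E U D s"
    and xs: "is_traj T A \<omega> t x0 \<xi>s"
  shows "value_fn T A B E U D g t x0 \<le> g (\<xi>s T)"
proof (rule value_le''[OF t])
  fix \<delta> :: "(real \<Rightarrow> real^'m) \<Rightarrow> real \<Rightarrow> real^'l" and \<eta> :: real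
  assume del: "\<delta> \<in> nonanticip t T U D" and e: "\<eta> > 0"
  have tT: "t \<le> T" and t0: "0 \<le> t" using t by auto
  have At: "continuous_on {t..T} A" using Ac t0 by (auto intro: continuous_on_subset)
  obtain u0 where u0: "u0 \<in> U" using Uc by blast
  obtain d0 where d0: "d0 \<in> D" using Dc by blast
  have dc: "\<And>u. u \<in> ctrl_set t T U \<Longrightarrow> \<delta> u \<in> ctrl_set t T D" using del by (auto simp: nonanticip_def)
  have Lg0: "Lg \<ge> 0" using glip by (simp add: lipschitz_on_def)
  have gl: "g y \<le> g (\<xi>s T) + Lg * norm (y - \<xi>s T)" for y
  proof -
    have "dist (g y) (g (\<xi>s T)) \<le> Lg * dist y (\<xi>s T)" using glip unfolding lipschitz_on_def by blast
    then show ?thesis by (simp add: dist_real_def dist_norm)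
  qed
  have xst: "\<xi>s t = x0" by (rule traj_start[OF xs tT])
  show "\<exists>u\<in>ctrl_set t T U. g (endpoint T A B E t x0 u (\<delta> u)) \<le> g (\<xi>s T) + \<eta>"
  proof (cases "t = T")
    case True
    have uc0: "(\<lambda>_. u0) \<in> ctrl_set t T U" using u0 by (simp add: ctrl_set_def)
    obtain \<xi> where xi: "is_traj T A (\<lambda>r. B r *v u0 + E r *v \<delta> (\<lambda>_. u0) r) t x0 \<xi>"
      and ep: "endpoint T A B E t x0 (\<lambda>_. u0) (\<delta> (\<lambda>_. u0)) = \<xi> T"
      using end_traj''[OF t uc0 dc[OF uc0]] by blast
    have "\<xi> T = x0" using traj_start[OF xi tT] True by simp
    moreover have "\<xi>s T = x0" using xst True by simp
    ultimately show ?thesis using uc0 ep e by (intro bexI[of _ "\<lambda>_. u0"]) auto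
  next
    case False
    then have tT': "t < T" using tT by simp
    obtain \<alpha> where a: "\<alpha> \<ge> 0" "\<And>s y. s \<in> {0..T} \<Longrightarrow> norm (A s *v y) \<le> \<alpha> * norm y"
      using mat_bound[OF Ac] by auto
    have aA: "\<And>r y. r \<in> {t..T} \<Longrightarrow> norm (A r *v y) \<le> \<alpha> * norm y" using a(2) t0 by auto
    obtain F where F: "F \<ge> 0" "\<And>s u d. s \<in> {0..T} \<Longrightarrow> u \<in> U \<Longrightarrow> d \<in> D \<Longrightarrow> norm (B s *v u + E s *v d) \<le> F"
      using forcing_F'' by blast
    obtain RU where RU: "RU > 0" "\<And>v. v \<in> U \<Longrightarrow> norm v \<le> RU"
      using compact_imp_bounded[OF Uc(1)] unfolding bounded_pos by blast
    have \<omega>b: "norm (\<omega> r) \<le> F" if "r \<in> {t..T}" for r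
      by (rule wset_bound[OF om[OF that] d0]) (use F(2) that t0 in auto)
    define Mt where "Mt = (norm x0 + F * (T - t)) * exp (\<alpha> * (T - t))"
    have trajb: "norm (\<xi> r) \<le> Mt"
      if "u \<in> ctrl_set t T U" "d \<in> ctrl_set t T D" "is_traj T A (\<lambda>r. B r *v u r + E r *v d r) t x0 \<xi>"
        "r \<in> {t..T}" for u d \<xi> r
      unfolding Mt_def
    proof (rule traj_bound[OF tT At a(1) aA _ that(3) that(4)])
      show "\<And>s. s \<in> {t..T} \<Longrightarrow> norm (B s *v u s + E s *v d s) \<le> F"
        using F(2) that(1,2) t0 by (auto simp: ctrl_set_def)
    qed
    obtain Ms where Ms': "Ms > 0" "\<forall>x\<in>\<xi>s ` {t..T}. norm x \<le> Ms"
      using compact_imp_bounded[OF compact_continuous_image[OF traj_cont[OF xs tT]]] unfolding bounded_pos by blast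
    then have Ms: "Ms \<ge> 0" "\<And>r. r \<in> {t..T} \<Longrightarrow> norm (\<xi>s r) \<le> Ms" by auto
    define Me where "Me = Mt + Ms"
    have Mt0: "Mt \<ge> 0" unfolding Mt_def using F(1) tT by simp
    have Me0: "Me \<ge> 0" using Mt0 Ms by (simp add: Me_def)
    define K where "K = \<alpha> * Me + 2 * F"
    have K0: "K \<ge> 0" using a Me0 F by (simp add: K_def)
    define CB where "CB = real CARD('n) * real CARD('m)"
    have CB0: "CB \<ge> 0" by (simp add: CB_def)
    define \<epsilon>q where "\<epsilon>q = (\<eta> / (Lg + 1)) ^ 2"
    have eq0: "\<epsilon>q > 0" using e Lg0 by (simp add: \<epsilon>q_def)
    define Cexp where "Cexp = exp (2 * \<alpha> * (T - t)) * (T - t)"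
    have Cexp0: "Cexp \<ge> 0" using tT by (simp add: Cexp_def)
    define Q where "Q = Cexp * (4 * Me * CB * RU)"
    have Q0: "Q \<ge> 0" using Cexp0 Me0 CB0 RU by (simp add: Q_def)
    define \<tau> where "\<tau> = \<epsilon>q / (2 * (Q + 1))"
    have tau0: "\<tau> > 0" using eq0 Q0 by (simp add: \<tau>_def)
    have Bt: "continuous_on {t..T} B" using Bc t0 by (auto intro: continuous_on_subset)
    obtain \<delta>B where dB: "\<delta>B > 0" "\<And>x x'. x \<in> {t..T} \<Longrightarrow> x' \<in> {t..T} \<Longrightarrow> dist x' x < \<delta>B \<Longrightarrow> dist (B x') (B x) < \<tau>"
      using compact_uniformly_continuous[OF Bt compact_Icc] tau0 unfolding uniformly_continuous_on_def by metis
    define P where "P = Cexp * (2 * \<alpha> * Me * K + K ^ 2)"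
    have P0: "P \<ge> 0" using Cexp0 a Me0 K0 by (simp add: P_def)
    obtain N :: nat where N: "real N > (T - t) / \<delta>B + (T - t) * (P + 1) * 2 / \<epsilon>q"
      using reals_Archimedean2 by blast
    have N1: "N \<ge> 1"
    proof -
      have "(T - t) / \<delta>B > 0" using tT' dB(1) by simp
      moreover have "(T - t) * (P + 1) * 2 / \<epsilon>q \<ge> 0" using tT P0 eq0 by simp
      ultimately show ?thesis using N by (cases N) auto
    qed
    define h where "h = (T - t) / real N"
    have h0: "h > 0" using tT' N1 by (simp add: h_def)
    have Nh: "real N * h = T - t" using N1 by (simp add: h_def)
    have hdB: "h < \<delta>B"
    proof -
      have "(T - t) * (P + 1) * 2 / \<epsilon>q \<ge> 0" using tT P0 eq0 by simp
      then have "real N > (T - t) / \<delta>B" using N by linarith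
      then have "real N * \<delta>B > T - t" using dB(1) by (simp add: field_simps)
      then show ?thesis using N1 dB(1) by (simp add: h_def field_simps)
    qed
    have hP: "h * (P + 1) < \<epsilon>q / 2"
    proof -
      have "(T - t) / \<delta>B \<ge> 0" using tT dB(1) by simp
      then have "real N > (T - t) * (P + 1) * 2 / \<epsilon>q" using N by linarith
      then have "real N * \<epsilon>q > (T - t) * (P + 1) * 2" using eq0 by (simp add: field_simps)
      then show ?thesis using N1 eq0 by (simp add: h_def field_simps)
    qed
    define sg where "sg j = t + real j * h" for j
    have sgN: "sg N = T" using Nh by (simp add: sg_def)
    have sgT: "sg j \<in> {t..T}" if "j \<le> N" for j
    proof -
      have "real j * h \<le> real N * h" using that h0 by (intro mult_right_mono) auto
      then show ?thesis using Nh h0 by (auto simp: sg_def)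
    qed
    define uc where "uc c = (\<lambda>r. c (idx t T N r))" for c :: "nat \<Rightarrow> real^'m"
    have ucc: "uc c \<in> ctrl_set t T U" if "\<And>i. c i \<in> U" for c
      unfolding ctrl_set_def uc_def using that idx_meas[of c t T N "{t..T}"] by auto
    define fc where "fc c r = B r *v uc c r + E r *v \<delta> (uc c) r" for c r
    define trj where "trj c = (SOME \<xi>. is_traj T A (fc c) t x0 \<xi>)" for c
    have trj_ok: "is_traj T A (fc c) t x0 (trj c)" if "\<And>i. c i \<in> U" for c
    proof -
      have uc1: "uc c \<in> ctrl_set t T U" by (rule ucc) (rule that)
      have "\<exists>\<xi>. is_traj T A (fc c) t x0 \<xi>"
        using end_traj''[OF t uc1 dc[OF uc1], of x0] unfolding fc_def by blast
      then show ?thesis unfolding trj_def by (rule someI_ex)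
    qed
    define am where "am v s = (SOME u. u \<in> U \<and> (\<forall>v'\<in>U. inner v (B s *v u) \<le> inner v (B s *v v')))" for v s
    have am_ok: "am v s \<in> U \<and> (\<forall>v'\<in>U. inner v (B s *v am v s) \<le> inner v (B s *v v'))" for v s
    proof -
      have "\<exists>u. u \<in> U \<and> (\<forall>v'\<in>U. inner v (B s *v u) \<le> inner v (B s *v v'))"
        using argmin_mv[OF Uc, of v "B s"] by blast
      then show ?thesis unfolding am_def by (rule someI_ex)
    qed
    define upd where "upd j c = am (trj c (sg j) - \<xi>s (sg j)) (sg j)" for j c
    define cs where "cs = rec_nat (\<lambda>_. u0) (\<lambda>j c. c(j := upd j c))"
    have csU: "cs j i \<in> U" for j i
    proof (induction j arbitrary: i)
      case 0 then show ?case using u0 by (simp add: cs_def)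
    next
      case (Suc j)
      have "cs (Suc j) = (cs j)(j := upd j (cs j))" unfolding cs_def by (rule rec_upd_Suc)
      then show ?case using Suc am_ok by (auto simp: upd_def)
    qed
    define cst where "cst = cs N"
    have cstU: "\<And>i. cst i \<in> U" using csU by (simp add: cst_def)
    have ucst: "uc cst \<in> ctrl_set t T U" by (rule ucc) (rule cstU)
    have ucs: "uc (cs j) \<in> ctrl_set t T U" for j by (rule ucc) (rule csU)
    have trj_cst: "is_traj T A (fc cst) t x0 (trj cst)" by (rule trj_ok) (rule cstU)
    have trj_cs: "is_traj T A (fc (cs j)) t x0 (trj (cs j))" for j by (rule trj_ok) (rule csU)
    have cst_fix: "cst j = upd j (cs j)" if "j < N" for j
      unfolding cst_def cs_def by (rule rec_upd_fix[OF that])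
    define \<xi> where "\<xi> = trj cst"
    define f where "f = fc cst"
    have xi: "is_traj T A f t x0 \<xi>" unfolding \<xi>_def f_def by (rule trj_cst)
    have agree: "trj (cs j) (sg j) = \<xi> (sg j)" if j: "j \<le> N" for j
    proof -
      have sj: "sg j \<in> {t..T}" by (rule sgT[OF j])
      have equ: "uc (cs j) r = uc cst r" if r: "r \<in> {t..sg j}" "r \<noteq> sg j" for r
      proof -
        have rT: "r \<in> {t..T}" using r sj by auto
        have "t + real (idx t T N r) * h \<le> r" using idx_bounds(1)[OF tT' N1 rT] by (simp add: h_def)
        moreover have "r < t + real j * h" using r by (simp add: sg_def)
        ultimately have "real (idx t T N r) * h < real j * h" by linarith
        then have "idx t T N r < j" using h0 by simp
        then have "cs N (idx t T N r) = cs j (idx t T N r)"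
          unfolding cs_def by (rule rec_upd_agree[OF _ j])
        then show ?thesis by (simp add: uc_def cst_def)
      qed
      have ae1: "AE r in lebesgue_on {t..sg j}. uc (cs j) r = uc cst r"
        by (rule AE_on_except_point[where c="sg j"]) (use equ in auto)
      have "AE r in lebesgue_on {t..sg j}. \<delta> (uc (cs j)) r = \<delta> (uc cst) r"
        using del ucs ucst sj ae1 unfolding nonanticip_def by blast
      then obtain N0 where N0: "negligible N0" "\<And>r. r \<in> {t..sg j} \<Longrightarrow> r \<notin> N0 \<Longrightarrow> \<delta> (uc (cs j)) r = \<delta> (uc cst) r"
        using AE_on_negligible by blast
      show ?thesis unfolding \<xi>_def
      proof (rule traj_agree[OF _ _ At trj_cs trj_cst])
        show "t \<le> sg j" "sg j \<le> T" using sj by auto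
        show "negligible (N0 \<union> {sg j})" using N0(1) by (simp add: negligible_Un)
        fix r assume "r \<in> {t..sg j}" "r \<notin> N0 \<union> {sg j}"
        then show "fc (cs j) r = fc cst r" using equ N0(2) by (simp add: fc_def)
      qed
    qed
    have fF: "norm (f r) \<le> F" if "r \<in> {t..T}" for r
      unfolding f_def fc_def
      using F(2)[of r "uc cst r" "\<delta> (uc cst) r"] ucst dc[OF ucst] that t0
      by (auto simp: ctrl_set_def)
    have MeB: "norm (\<xi> r - \<xi>s r) \<le> Me" if r: "r \<in> {t..T}" for r
    proof -
      have "norm (\<xi> r) \<le> Mt"
        by (rule trajb[OF ucst dc[OF ucst] xi[unfolded f_def fc_def] r])
      then show ?thesis using Ms(2)[OF r] norm_triangle_ineq4[of "\<xi> r" "\<xi>s r"] by (simp add: Me_def)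
    qed
    have KB: "norm (A r *v (\<xi> r - \<xi>s r) + (f r - \<omega> r)) \<le> K" if r: "r \<in> {t..T}" for r
    proof -
      have "norm (A r *v (\<xi> r - \<xi>s r) + (f r - \<omega> r)) \<le> norm (A r *v (\<xi> r - \<xi>s r)) + (norm (f r) + norm (\<omega> r))"
        by (metis norm_triangle_ineq norm_triangle_ineq4 add_left_mono order_trans)
      also have "\<dots> \<le> \<alpha> * Me + (F + F)"
      proof (intro add_mono)
        show "norm (A r *v (\<xi> r - \<xi>s r)) \<le> \<alpha> * Me"
          using aA[OF r, of "\<xi> r - \<xi>s r"] MeB[OF r] a(1) by (meson mult_left_mono order_trans)
      qed (use fF[OF r] \<omega>b[OF r] in auto)
      finally show ?thesis by (simp add: K_def)
    qed
    define \<rho> where "\<rho> = Me * (CB * \<tau> * (2 * RU))"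
    have rho0: "\<rho> \<ge> 0" using Me0 CB0 tau0 RU by (simp add: \<rho>_def)
    define a where "a j = norm (\<xi> (sg j) - \<xi>s (sg j)) ^ 2" for j
    define c where "c = 2 * \<alpha> * Me * K * h ^ 2 + 2 * h * \<rho> + K ^ 2 * h ^ 2"
    have c0: "c \<ge> 0" using a Me0 K0 h0 rho0 by (simp add: c_def)
    have step: "a (Suc j) \<le> (1 + 2 * \<alpha> * h) * a j + c" if j: "j < N" for j
    proof -
      have sj: "sg j \<in> {t..T}" and sj1: "sg (Suc j) \<in> {t..T}" using sgT j by auto
      have "norm (\<xi> (sg (Suc j)) - \<xi>s (sg (Suc j))) ^ 2 \<le> (1 + 2 * \<alpha> * h) * norm (\<xi> (sg j) - \<xi>s (sg j)) ^ 2
           + (2 * \<alpha> * Me * K * h ^ 2 + 2 * h * \<rho> + K ^ 2 * h ^ 2)"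
      proof (rule step_est[OF _ _ _ _ aA a(1) xi xs MeB KB])
        show "t \<le> sg j" "sg j \<le> sg (Suc j)" "sg (Suc j) \<le> T" using sj sj1 h0 by (auto simp: sg_def algebra_simps)
        show "sg (Suc j) - sg j = h" by (simp add: sg_def algebra_simps)
        fix r assume r: "r \<in> {sg j..<sg (Suc j)}"
        have rT: "r \<in> {t..T}" using r sj sj1 by auto
        have ix: "idx t T N r = j"
          by (rule idx_eq[OF tT' N1 j]) (use r in \<open>auto simp: sg_def h_def\<close>)
        define ej where "ej = \<xi> (sg j) - \<xi>s (sg j)"
        have ucr: "uc cst r = am ej (sg j)"
          using cst_fix[OF j] agree[of j] j by (simp add: uc_def ix upd_def ej_def)
        have omr: "\<omega> r \<in> mdiff ((\<lambda>u. B r *v u) ` U) ((\<lambda>d. - (E r *v d)) ` D)"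
          using om[OF rT] by (simp add: Wset_def)
        have dr: "\<delta> (uc cst) r \<in> D" using dc[OF ucst] rT by (auto simp: ctrl_set_def)
        have "inner ej (B r *v am ej (sg j) + E r *v \<delta> (uc cst) r - \<omega> r)
            \<le> norm ej * (real CARD('n) * real CARD('m) * norm (B r - B (sg j)) * (2 * RU))"
          by (rule w_arg[OF omr Dc dr]) (use am_ok RU(2) in auto)
        also have "\<dots> \<le> Me * (CB * \<tau> * (2 * RU))"
        proof (rule mult_mono)
          show "norm ej \<le> Me" using MeB[OF sj] by (simp add: ej_def)
          have "dist (B r) (B (sg j)) < \<tau>"
          proof (rule dB(2)[OF sj rT])
            have "r - sg j < h" using r by (simp add: sg_def algebra_simps)
            then show "dist r (sg j) < \<delta>B" using r hdB by (simp add: dist_real_def)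
          qed
          then have "norm (B r - B (sg j)) \<le> \<tau>" by (simp add: dist_norm)
          then show "real CARD('n) * real CARD('m) * norm (B r - B (sg j)) * (2 * RU) \<le> CB * \<tau> * (2 * RU)"
            unfolding CB_def using RU(1) by (intro mult_right_mono mult_left_mono) auto
        qed (use Me0 RU(1) in auto)
        finally show "inner (\<xi> (sg j) - \<xi>s (sg j)) (f r - \<omega> r) \<le> \<rho>"
          by (simp add: f_def fc_def ucr ej_def \<rho>_def)
      qed
      then show ?thesis by (simp add: a_def c_def)
    qed
    have a0: "a 0 \<le> 0" using traj_start[OF xi tT] xst by (simp add: a_def sg_def)
    have aN: "a N \<le> (1 + 2 * \<alpha> * h) ^ N * real N * c"
      by (rule rec_growth[OF step a0 _ c0]) (use a h0 in auto)
    also have "\<dots> \<le> exp (2 * \<alpha> * (T - t)) * (real N * c)"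
    proof -
      have "(1 + 2 * \<alpha> * h) ^ N \<le> exp (real N * (2 * \<alpha> * h))"
        by (rule pow_le_exp) (use a h0 in auto)
      also have "real N * (2 * \<alpha> * h) = 2 * \<alpha> * (real N * h)" by (simp add: algebra_simps)
      also have "\<dots> = 2 * \<alpha> * (T - t)" by (simp only: Nh)
      finally have "(1 + 2 * \<alpha> * h) ^ N \<le> exp (2 * \<alpha> * (T - t))" .
      then show ?thesis using c0 by (simp add: mult.assoc mult_right_mono)
    qed
    also have "\<dots> = Cexp * (2 * \<alpha> * Me * K * h + 2 * \<rho> + K ^ 2 * h)"
    proof -
      have "real N * c = (real N * h) * (2 * \<alpha> * Me * K * h + 2 * \<rho> + K ^ 2 * h)"
        by (simp add: c_def power2_eq_square algebra_simps)
      also have "\<dots> = (T - t) * (2 * \<alpha> * Me * K * h + 2 * \<rho> + K ^ 2 * h)" by (simp only: Nh)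
      finally have eqNc: "real N * c = (T - t) * (2 * \<alpha> * Me * K * h + 2 * \<rho> + K ^ 2 * h)" .
      show ?thesis unfolding eqNc Cexp_def by (simp only: mult.assoc)
    qed
    also have "\<dots> = P * h + Q * \<tau>"
    proof -
      have e1: "2 * \<alpha> * Me * K * h + 2 * \<rho> + K ^ 2 * h = (2 * \<alpha> * Me * K + K ^ 2) * h + 2 * \<rho>"
        by (simp only: distrib_right add.assoc add.commute[of "2 * \<rho>"])
      have e2: "Cexp * (2 * \<rho>) = Q * \<tau>"
        unfolding Q_def \<rho>_def by (simp only: ac_simps)
      have e3: "Cexp * ((2 * \<alpha> * Me * K + K ^ 2) * h) = P * h"
        unfolding P_def by (simp only: mult.assoc)
      show ?thesis by (simp only: e1 distrib_left e2 e3)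
    qed
    also have "\<dots> \<le> \<epsilon>q"
    proof -
      have "P * h \<le> h * (P + 1)" using h0 by (simp add: algebra_simps)
      moreover have "Q * \<tau> \<le> \<epsilon>q / 2"
      proof -
        have "Q * \<tau> = \<epsilon>q / 2 * (Q / (Q + 1))" using Q0 by (simp add: \<tau>_def field_simps)
        also have "\<dots> \<le> \<epsilon>q / 2 * 1" using Q0 eq0 by (intro mult_left_mono) auto
        finally show ?thesis by simp
      qed
      ultimately show ?thesis using hP by linarith
    qed
    finally have "norm (\<xi> T - \<xi>s T) ^ 2 \<le> (\<eta> / (Lg + 1)) ^ 2" using sgN by (simp add: a_def \<epsilon>q_def)
    then have nb: "norm (\<xi> T - \<xi>s T) \<le> \<eta> / (Lg + 1)"
      by (rule power2_le_imp_le) (use e Lg0 in simp)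
    have ep: "endpoint T A B E t x0 (uc cst) (\<delta> (uc cst)) = \<xi> T"
      by (rule endpoint_traj[OF tT At xi[unfolded f_def fc_def]])
    have "g (\<xi> T) \<le> g (\<xi>s T) + Lg * (\<eta> / (Lg + 1))"
      using gl[of "\<xi> T"] nb Lg0 by (meson add_left_mono mult_left_mono order_trans)
    also have "Lg * (\<eta> / (Lg + 1)) \<le> \<eta>" using Lg0 e by (simp add: field_simps)
    finally show ?thesis using ucst ep by (intro bexI[of _ "uc cst"]) auto
  qed
qed

end


theorem theorem4:
  fixes T :: real
    and A :: "real \<Rightarrow> real^'n^'n" and B :: "real \<Rightarrow> real^'m^'n" and E :: "real \<Rightarrow> real^'l^'n"
    and U :: "(real^'m) set" and D :: "(real^'l) set"
    and g :: "real^'n \<Rightarrow> real"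
    and N :: nat and nk :: "nat \<Rightarrow> nat" and \<gamma> :: "nat \<Rightarrow> real"
    and xb :: "nat \<Rightarrow> nat \<Rightarrow> real^'n" and p :: "nat \<Rightarrow> nat \<Rightarrow> real^'n"
    and lam :: "nat \<Rightarrow> nat \<Rightarrow> real \<Rightarrow> real^'n" and q :: "nat \<Rightarrow> nat \<Rightarrow> real \<Rightarrow> real"
  assumes T_pos: "T > 0"
    and A_cont: "continuous_on {0..T} A"
    and B_cont: "continuous_on {0..T} B"
    and E_cont: "continuous_on {0..T} E"
    and U_cc: "compact U" "convex U" "U \<noteq> {}"
    and D_cc: "compact D" "convex D" "D \<noteq> {}"
    and g_cont: "continuous_on UNIV g"
    and g_convex: "convex_on UNIV g"
    and g_lip: "\<exists>L. L-lipschitz_on UNIV g"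
    and N_pos: "N \<ge> 1"
    and nk_pos: "\<forall>k\<in>{1..N}. nk k \<ge> 1"
    and levels: "\<forall>k\<in>{1..N}. \<gamma> k \<in> range g"
    and pts: "\<forall>k\<in>{1..N}. \<forall>i\<in>{1..nk k}. g (xb i k) = \<gamma> k"
    and subgr: "\<forall>k\<in>{1..N}. \<forall>i\<in>{1..nk k}. p i k \<in> frechet_subdiff g (xb i k)"
    and lam_ode: "\<forall>k\<in>{1..N}. \<forall>i\<in>{1..nk k}. \<forall>s\<in>{0..T}.
        (lam i k has_vector_derivative (- (transpose (A s) *v lam i k s))) (at s within {0..T})"
    and q_ode: "\<forall>k\<in>{1..N}. \<forall>i\<in>{1..nk k}. \<forall>s\<in>{0..T}.
        (q i k has_real_derivative hamil B E U D (lam i k s) s) (at s within {0..T})"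
    and lam_T: "\<forall>k\<in>{1..N}. \<forall>i\<in>{1..nk k}. lam i k T = p i k"
    and q_T: "\<forall>k\<in>{1..N}. \<forall>i\<in>{1..nk k}. q i k T = - inner (p i k) (xb i k) + \<gamma> k"
  shows
    "(\<forall>t\<in>{0..T}. \<forall>x. vlow lam q N nk t x \<le> value_fn T A B E U D g t x)
     \<and>
     ((\<forall>s\<in>{0..T}. Wset B E U D s \<noteq> {} \<and>
         msum (Wset B E U D s) ((\<lambda>d. - (E s *v d)) ` D) = (\<lambda>u. B s *v u) ` U)
      \<longrightarrow>
      (\<forall>t k i \<xi> \<omega>.
         t \<in> {0..T} \<and> k \<in> {1..N} \<and> i \<in> {1..nk k}
         \<and> \<omega> \<in> borel_measurable (lebesgue_on {t..T})
         \<and> (\<forall>s\<in>{t..T}. \<omega> s \<in> Wset B E U D s)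
         \<and> is_traj T A \<omega> t (\<xi> t) \<xi>
         \<and> \<xi> T = xb i k
         \<and> (AE s in lebesgue_on {t..T}. \<forall>w\<in>Wset B E U D s.
               inner (- lam i k s) w \<le> inner (- lam i k s) (\<omega> s))
         \<longrightarrow> value_fn T A B E U D g t (\<xi> t) = \<gamma> k \<and> vlow lam q N nk t (\<xi> t) = \<gamma> k))"
proof -
  obtain Lg where glip: "Lg-lipschitz_on UNIV g" using g_lip by blast
  note ctx = T_pos A_cont B_cont E_cont U_cc(1) U_cc(3) D_cc(1) D_cc(3) glip
  have fin: "finite {inner (lam i k t) x + q i k t | i k. k \<in> {1..N} \<and> i \<in> {1..nk k}}" for t x
  proof -
    have "{inner (lam i k t) x + q i k t | i k. k \<in> {1..N} \<and> i \<in> {1..nk k}}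
        = (\<lambda>(k, i). inner (lam i k t) x + q i k t) ` (SIGMA k:{1..N}. {1..nk k})" by (auto; blast)
    then show ?thesis by simp
  qed
  have ne: "{inner (lam i k t) x + q i k t | i k. k \<in> {1..N} \<and> i \<in> {1..nk k}} \<noteq> {}" for t x
  proof -
    have "1 \<in> {1..N}" using N_pos by simp
    moreover have "1 \<in> {1..nk 1}" using nk_pos N_pos by auto
    ultimately show ?thesis by blast
  qed
  have single: "inner (lam i k t) x + q i k t \<le> value_fn T A B E U D g t x"
    if t: "t \<in> {0..T}" and k: "k \<in> {1..N}" and i: "i \<in> {1..nk k}" for t x i k
  proof (rule part_a_single[OF ctx t])
    show "\<And>s. s \<in> {0..T} \<Longrightarrow> (lam i k has_vector_derivative - (transpose (A s) *v lam i k s)) (at s within {0..T})"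
      using lam_ode k i by blast
    show "\<And>s. s \<in> {0..T} \<Longrightarrow> (q i k has_real_derivative hamil B E U D (lam i k s) s) (at s within {0..T})"
      using q_ode k i by blast
    show "convex_on UNIV g" by (rule g_convex)
    show "lam i k T \<in> frechet_subdiff g (xb i k)" using subgr lam_T k i by auto
    show "q i k T = - inner (lam i k T) (xb i k) + g (xb i k)" using q_T lam_T pts k i by auto
  qed
  have partA: "\<forall>t\<in>{0..T}. \<forall>x. vlow lam q N nk t x \<le> value_fn T A B E U D g t x"
  proof (intro ballI allI)
    fix t x assume t: "t \<in> {0..T}"
    show "vlow lam q N nk t x \<le> value_fn T A B E U D g t x"
      unfolding vlow_def using single[OF t] by (subst Max_le_iff[OF fin ne]) blast
  qed
  show ?thesis
  proof (rule conjI[OF partA], intro impI allI)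
    fix t k i and \<xi> \<omega> :: "real \<Rightarrow> real^'n"
    assume W: "\<forall>s\<in>{0..T}. Wset B E U D s \<noteq> {} \<and>
         msum (Wset B E U D s) ((\<lambda>d. - (E s *v d)) ` D) = (\<lambda>u. B s *v u) ` U"
    assume H: "t \<in> {0..T} \<and> k \<in> {1..N} \<and> i \<in> {1..nk k}
         \<and> \<omega> \<in> borel_measurable (lebesgue_on {t..T})
         \<and> (\<forall>s\<in>{t..T}. \<omega> s \<in> Wset B E U D s)
         \<and> is_traj T A \<omega> t (\<xi> t) \<xi>
         \<and> \<xi> T = xb i k
         \<and> (AE s in lebesgue_on {t..T}. \<forall>w\<in>Wset B E U D s.
               inner (- lam i k s) w \<le> inner (- lam i k s) (\<omega> s))"
    have t: "t \<in> {0..T}" and k: "k \<in> {1..N}" and i: "i \<in> {1..nk k}"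
      and om: "\<And>s. s \<in> {t..T} \<Longrightarrow> \<omega> s \<in> Wset B E U D s"
      and xi: "is_traj T A \<omega> t (\<xi> t) \<xi>" and xT: "\<xi> T = xb i k"
      and ae: "AE s in lebesgue_on {t..T}. \<forall>w\<in>Wset B E U D s. inner (- lam i k s) w \<le> inner (- lam i k s) (\<omega> s)"
      using H by auto
    have tT: "t \<le> T" and t0: "0 \<le> t" using t by auto
    have up: "value_fn T A B E U D g t (\<xi> t) \<le> \<gamma> k"
      using part_b_upper[OF ctx t om xi] xT pts k i by auto
    obtain F where F: "F \<ge> 0" "\<And>s u d. s \<in> {0..T} \<Longrightarrow> u \<in> U \<Longrightarrow> d \<in> D \<Longrightarrow> norm (B s *v u + E s *v d) \<le> F"
      using forcing_F[OF ctx] by blast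
    obtain d0 where d0: "d0 \<in> D" using D_cc by blast
    have \<omega>b: "norm (\<omega> r) \<le> F" if "r \<in> {t..T}" for r
      by (rule wset_bound[OF om[OF that] d0]) (use F(2) that t0 in auto)
    have lamk: "\<And>s. s \<in> {0..T} \<Longrightarrow> (lam i k has_vector_derivative - (transpose (A s) *v lam i k s)) (at s within {0..T})"
      using lam_ode k i by blast
    have qk: "\<And>s. s \<in> {0..T} \<Longrightarrow> (q i k has_real_derivative hamil B E U D (lam i k s) s) (at s within {0..T})"
      using q_ode k i by blast
    have ae2: "AE r in lebesgue_on {t..T}. inner (lam i k r) (\<omega> r) + hamil B E U D (lam i k r) r \<le> 0"
      using ae
    proof (rule lebesgue_on_mono)
      fix r assume h: "\<forall>w\<in>Wset B E U D r. inner (- lam i k r) w \<le> inner (- lam i k r) (\<omega> r)"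
        and r: "r \<in> {t..T}"
      have r0: "r \<in> {0..T}" using r t0 by auto
      have "hamil B E U D (lam i k r) r \<le> inner (- lam i k r) (\<omega> r)"
      proof (rule hamil_le[OF compact_imp_bounded[OF U_cc(1)] U_cc(3) compact_imp_bounded[OF D_cc(1)]])
        fix u assume u: "u \<in> U"
        have "B r *v u \<in> msum (Wset B E U D r) ((\<lambda>d. - (E r *v d)) ` D)"
          using W r0 u by auto
        then obtain w d' where wd: "w \<in> Wset B E U D r" "d' \<in> D" "B r *v u = w + - (E r *v d')"
          unfolding msum_def by auto
        have "B r *v u + E r *v d' = w" using wd(3) by simp
        then show "\<exists>d\<in>D. inner (- lam i k r) (B r *v u + E r *v d) \<le> inner (- lam i k r) (\<omega> r)"
          using wd h by auto
      qed
      then show "inner (lam i k r) (\<omega> r) + hamil B E U D (lam i k r) r \<le> 0" by simp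
    qed
    have "inner (lam i k T) (\<xi> T) + q i k T \<le> inner (lam i k t) (\<xi> t) + q i k t"
      by (rule G_upper[OF t0 tT A_cont lamk qk xi \<omega>b ae2])
    moreover have "inner (lam i k T) (\<xi> T) + q i k T = \<gamma> k"
      using lam_T q_T xT k i by auto
    ultimately have lo1: "\<gamma> k \<le> inner (lam i k t) (\<xi> t) + q i k t" by simp
    have lo2: "inner (lam i k t) (\<xi> t) + q i k t \<le> vlow lam q N nk t (\<xi> t)"
      unfolding vlow_def by (rule Max_ge[OF fin]) (use k i in blast)
    have vv: "vlow lam q N nk t (\<xi> t) \<le> value_fn T A B E U D g t (\<xi> t)"
      using partA t by blast
    show "value_fn T A B E U D g t (\<xi> t) = \<gamma> k \<and> vlow lam q N nk t (\<xi> t) = \<gamma> k"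
      using lo1 lo2 vv up by linarith
  qed
qed


end
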